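(* Let $A>0$, $\alpha>0$ and $k\ge1$, and let $S_k$ be the disjoint union of $k$ equal squares of total area $A$. Then \[ \frac{4\alpha\pi^2k}{A^{1/2}(\pi^2k^{1/2}+2\alpha A^{1/2})}\le\lambda_k(S_k,\alpha)\le\frac{\pi^2k^{1/2}}{(\pi^2-8)A}\Big[\pi^2k^{1/2}+2\alpha A^{1/2}-\sqrt{64\alpha k^{1/2}A^{1/2}+(\pi^2k^{1/2}-2\alpha A^{1/2})^2}\Big]. \]
   Context: For a bounded open set $\Omega\subset\mathbb{R}^2$ with Lipschitz boundary (possibly disconnected) and $\alpha>0$, $\lambda_1(\Omega,\alpha)\le\lambda_2(\Omega,\alpha)\le\cdots$ denote the eigenvalues, counted with multiplicity, of the Robin Laplacian $-\Delta u=\lambda u$, $\partial_\nu u+\alpha u=0$ on $\partial\Omega$ (defined via the form $\int_\Omega\nabla u\cdot\overline{\nabla v}+\alpha\int_{\partial\Omega}u\overline v$ on $H^1(\Omega)$). Each square of $S_k$ has side length $(A/k)^{1/2}$. *)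

theory Defs
  imports "HOL-Analysis.Analysis"
begin

type_synonym pt = "real \<times> real"

text \<open>Admissible test functions: real-valued C1 functions on the plane (restricted to the domain
  they are dense in H1 of a Lipschitz domain).\<close>
definition C1_fun :: "(pt \<Rightarrow> real) \<Rightarrow> bool" where
  "C1_fun u \<longleftrightarrow> u differentiable_on UNIV \<and>
     continuous_on UNIV (\<lambda>x. frechet_derivative u (at x) (1,0)) \<and>
     continuous_on UNIV (\<lambda>x. frechet_derivative u (at x) (0,1))"

definition dirichlet :: "pt set \<Rightarrow> (pt \<Rightarrow> real) \<Rightarrow> real" where
  "dirichlet \<Omega> u = integral \<Omega> (\<lambda>x. (frechet_derivative u (at x) (1,0))\<^sup>2
                                   + (frechet_derivative u (at x) (0,1))\<^sup>2)"

text \<open>Robin Rayleigh quotient; bint is the boundary integral (w.r.t. arc length) functional.\<close>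
definition robin_rayleigh ::
    "pt set \<Rightarrow> ((pt \<Rightarrow> real) \<Rightarrow> real) \<Rightarrow> real \<Rightarrow> (pt \<Rightarrow> real) \<Rightarrow> real" where
  "robin_rayleigh \<Omega> bint \<alpha> v =
     (dirichlet \<Omega> v + \<alpha> * bint (\<lambda>x. (v x)\<^sup>2)) / integral \<Omega> (\<lambda>x. (v x)\<^sup>2)"

text \<open>k-th Robin eigenvalue (counted with multiplicity) via the min-max principle:
  infimum over k-dimensional subspaces (spanned by u_0..u_{k-1}, linearly independent in L2 of
  the domain) of the maximum of the Rayleigh quotient.\<close>
definition robin_eig ::
    "pt set \<Rightarrow> ((pt \<Rightarrow> real) \<Rightarrow> real) \<Rightarrow> real \<Rightarrow> nat \<Rightarrow> real" where
  "robin_eig \<Omega> bint \<alpha> k =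
     Inf { Sup { robin_rayleigh \<Omega> bint \<alpha> (\<lambda>x. \<Sum>i<k. c i * u i x) | c. \<exists>i<k. c i \<noteq> 0 }
         | u. (\<forall>i<k. C1_fun (u i)) \<and>
              (\<forall>c. integral \<Omega> (\<lambda>x. (\<Sum>i<k. c i * u i x)\<^sup>2) = 0 \<longrightarrow> (\<forall>i<k. c i = 0)) }"

text \<open>The i-th open square of side s, placed at [2 i s, 2 i s + s] x [0, s] (closures disjoint).\<close>
definition sq_cell :: "real \<Rightarrow> nat \<Rightarrow> pt set" where
  "sq_cell s i = {(x,y). 2 * real i * s < x \<and> x < 2 * real i * s + s \<and> 0 < y \<and> y < s}"

definition sq_side :: "real \<Rightarrow> nat \<Rightarrow> real" where
  "sq_side A k = sqrt (A / real k)"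

definition S_union :: "real \<Rightarrow> nat \<Rightarrow> pt set" where
  "S_union A k = (\<Union>i<k. sq_cell (sq_side A k) i)"

definition S_bint :: "real \<Rightarrow> nat \<Rightarrow> (pt \<Rightarrow> real) \<Rightarrow> real" where
  "S_bint A k g = (let s = sq_side A k in
     \<Sum>i<k. let a = 2 * real i * s in
       integral {0..s} (\<lambda>t. g (a + t, 0) + g (a + t, s) + g (a, t) + g (a + s, t)))"

definition robin_eig_S :: "real \<Rightarrow> nat \<Rightarrow> real \<Rightarrow> nat \<Rightarrow> real" where
  "robin_eig_S A k \<alpha> n = robin_eig (S_union A k) (S_bint A k) \<alpha> n"

end

theory Submission
  imports Defs
begin

lemma pi_sq_gt8: "pi\<^sup>2 > (8::real)"
proof -
  have "pi > 3" using pi_gt3 .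
  then have "pi * pi > 3 * 3" by (intro mult_strict_mono) auto
  then show ?thesis by (simp add: power2_eq_square)
qed

lemma tan_ratio_mono:
  fixes z y :: real
  assumes "0 < z" "z \<le> y" "y < pi/2"
  shows "tan z / z \<le> tan y / y"
proof -
  have "\<forall>t. z \<le> t \<and> t \<le> y \<longrightarrow> (\<exists>d. ((\<lambda>t. tan t / t) has_real_derivative d) (at t) \<and> 0 \<le> d)"
  proof (intro allI impI)
    fix t assume t: "z \<le> t \<and> t \<le> y"
    have tpos: "0 < t" using t assms by auto
    have tlt: "t < pi/2" using t assms by auto
    have c: "cos t > 0" using tpos tlt by (intro cos_gt_zero_pi) auto
    have s: "sin t \<ge> 0" using tpos tlt by (intro sin_ge_zero) auto
    have d: "((\<lambda>t. tan t / t) has_real_derivative (inverse ((cos t)\<^sup>2) * t - tan t) / t\<^sup>2) (at t)"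
      using c tpos by (auto intro!: derivative_eq_intros simp: power2_eq_square)
    have "sin t * cos t \<le> t"
    proof -
      have "sin t * cos t \<le> sin t" using s cos_le_one[of t] by (simp add: mult_left_le)
      also have "\<dots> \<le> t" using sin_x_le_x tpos by simp
      finally show ?thesis .
    qed
    then have "tan t \<le> inverse ((cos t)\<^sup>2) * t"
      using c by (simp add: tan_def field_simps power2_eq_square)
    then have "0 \<le> (inverse ((cos t)\<^sup>2) * t - tan t) / t\<^sup>2" by simp
    with d show "\<exists>d. ((\<lambda>t. tan t / t) has_real_derivative d) (at t) \<and> 0 \<le> d" by blast
  qed
  then show ?thesis using DERIV_nonneg_imp_nondecreasing[OF assms(2)] by blast
qed

lemma becker_stark:
  fixes y :: real
  assumes "0 \<le> y" "y \<le> pi/2"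
  shows "(pi\<^sup>2 - 4*y\<^sup>2) * sin y \<le> pi\<^sup>2 * y * cos y"
proof -
  define c where "c = pi\<^sup>2 - 8"
  have cpos: "c > 0" using pi_sq_gt8 by (simp add: c_def)
  define H where "H = (\<lambda>y::real. pi\<^sup>2 * y * cos y - (pi\<^sup>2 - 4*y\<^sup>2) * sin y)"
  define p where "p = (\<lambda>y::real. 4 * y * cos y - c * sin y)"
  have dH: "(H has_real_derivative y * p y) (at y)" for y
    unfolding H_def p_def c_def
    by (auto intro!: derivative_eq_intros simp: power2_eq_square algebra_simps)
  have H0: "H 0 = 0" by (simp add: H_def)
  have Hpi: "H (pi/2) = 0" by (simp add: H_def power2_eq_square)
  have M: "p z \<ge> 0" if "0 < z" "z \<le> w" "w < pi/2" "p w \<ge> 0" for z w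
  proof -
    have cw: "cos w > 0" "cos z > 0" using that by (auto intro!: cos_gt_zero_pi)
    have "sin w \<le> (4/c) * (w * cos w)" using that(4) cpos by (simp add: p_def field_simps)
    then have "tan w / w \<le> 4/c" using cw that by (simp add: tan_def field_simps)
    moreover have "tan z / z \<le> tan w / w" using tan_ratio_mono that by blast
    ultimately have "tan z / z \<le> 4/c" by linarith
    then have "sin z \<le> (4/c) * (z * cos z)" using cw that by (simp add: tan_def field_simps)
    then show ?thesis using cpos by (simp add: p_def field_simps)
  qed
  show ?thesis
  proof (cases "y = 0 \<or> y = pi/2")
    case True
    then consider "y = 0" | "y = pi/2" by blast
    then show ?thesis
    proof cases
      case 2
      have "(pi\<^sup>2 - 4*(pi/2)\<^sup>2) * sin (pi/2) \<le> pi\<^sup>2 * (pi/2) * cos (pi/2)"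
        by (simp add: power2_eq_square)
      then show ?thesis unfolding 2 .
    qed simp
  next
    case False
    then have y: "0 < y" "y < pi/2" using assms by auto
    show ?thesis
    proof (cases "p y \<ge> 0")
      case True
      have "H 0 \<le> H y"
      proof (rule DERIV_nonneg_imp_nondecreasing[OF assms(1)])
        fix t assume t1: "0 \<le> t" and t2: "t \<le> y"
        note t = conjI[OF t1 t2]
        have "0 \<le> t * p t"
        proof (cases "t = 0")
          case False then show ?thesis using M[of t y] t y True by auto
        qed simp
        then show "\<exists>d. (H has_real_derivative d) (at t) \<and> 0 \<le> d" using dH by blast
      qed
      then show ?thesis using H0 by (simp add: H_def)
    next
      case False
      have "H (pi/2) \<le> H y"
      proof (rule DERIV_nonpos_imp_nonincreasing[OF assms(2)])
        fix t assume t1: "y \<le> t" and t2: "t \<le> pi/2"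
        note t = conjI[OF t1 t2]
        have "p t \<le> 0"
        proof (cases "t = pi/2")
          case True
          have "p (pi/2) \<le> 0" using cpos by (simp add: p_def)
          then show ?thesis unfolding True .
        next
          case False then show ?thesis using M[of y t] t y \<open>\<not> p y \<ge> 0\<close> by force
        qed
        then have "t * p t \<le> 0" using t y by (simp add: mult_nonneg_nonpos)
        then show "\<exists>d. (H has_real_derivative d) (at t) \<and> d \<le> 0" using dH by blast
      qed
      then show ?thesis using Hpi by (simp add: H_def)
    qed
  qed
qed

lemma robin1d:
  fixes g g' :: "real \<Rightarrow> real" and s \<alpha> :: real
  assumes s: "s > 0" and a: "\<alpha> > 0"
    and dg: "\<And>t. (g has_real_derivative g' t) (at t)"
    and cg: "continuous_on UNIV g'"
  shows "(2*\<alpha>*pi\<^sup>2 / (s*(pi\<^sup>2 + 2*\<alpha>* s))) * integral {0..s} (\<lambda>t. (g t)\<^sup>2)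
           \<le> integral {0..s} (\<lambda>t. (g' t)\<^sup>2) + \<alpha> * ((g 0)\<^sup>2 + (g s)\<^sup>2)"
proof -
  define m where "m = 2*\<alpha>*pi\<^sup>2 / (s*(pi\<^sup>2 + 2*\<alpha>* s))"
  have mpos: "m > 0" using s a unfolding m_def by (intro divide_pos_pos mult_pos_pos add_pos_pos) auto
  define x where "x = sqrt m"
  have xpos: "x > 0" and xx: "x * x = m" using mpos by (auto simp: x_def)
  define y where "y = x * s / 2"
  have ypos: "y > 0" using xpos s by (simp add: y_def)
  have y2: "4 * y\<^sup>2 = m * s\<^sup>2" using xx by (simp add: y_def power2_eq_square field_simps)
  have dpos: "pi\<^sup>2 + 2 * \<alpha> * s > 0" using s a by (intro add_pos_pos) auto
  have key: "pi\<^sup>2 * m * s / 2 = \<alpha> * (pi\<^sup>2 - m * s\<^sup>2)"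
  proof -
    have "m * (s * (pi\<^sup>2 + 2 * \<alpha> * s)) = 2 * \<alpha> * pi\<^sup>2" using s dpos by (simp add: m_def)
    then show ?thesis by (simp add: power2_eq_square algebra_simps)
  qed
  have ms: "pi\<^sup>2 - m * s\<^sup>2 > 0"
  proof -
    have "pi\<^sup>2 * m * s / 2 > 0" using mpos s by simp
    then have "\<alpha> * (pi\<^sup>2 - m * s\<^sup>2) > 0" using key by simp
    then show ?thesis using a by (simp add: zero_less_mult_iff)
  qed
  have ylt: "y < pi/2"
  proof -
    have "(2*y)\<^sup>2 < pi\<^sup>2" using y2 ms by (simp add: power2_eq_square)
    then have "2*y < pi" using ypos by (smt (verit) pi_gt_zero power_mono)
    then show ?thesis by simp
  qed
  have cy: "cos y > 0" using ypos ylt by (intro cos_gt_zero_pi) auto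
  define T where "T = x * tan y"
  have Tle: "T \<le> \<alpha>"
  proof -
    have bs: "(pi\<^sup>2 - 4*y\<^sup>2) * sin y \<le> pi\<^sup>2 * y * cos y"
      using becker_stark[of y] ypos ylt by simp
    have "tan y * (pi\<^sup>2 - 4*y\<^sup>2) \<le> pi\<^sup>2 * y"
      using bs cy by (simp add: tan_def field_simps)
    then have "T * (pi\<^sup>2 - m * s\<^sup>2) \<le> x * (pi\<^sup>2 * y)"
      using y2 xpos unfolding T_def by (simp add: mult.assoc mult_left_mono)
    also have "\<dots> = pi\<^sup>2 * m * s / 2" using xx by (simp add: y_def field_simps)
    also have "\<dots> = \<alpha> * (pi\<^sup>2 - m * s\<^sup>2)" by (rule key)
    finally show ?thesis using ms by simp
  qed
  define \<psi> where "\<psi> = (\<lambda>t. - x * tan (x * (t - s/2)))"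
  have cpos: "cos (x * (t - s/2)) > 0" if "t \<in> {0..s}" for t
  proof -
    have "\<bar>x * (t - s/2)\<bar> \<le> y" using that xpos by (auto simp: y_def abs_le_iff field_simps)
    then show ?thesis using ylt by (intro cos_gt_zero_pi) auto
  qed
  have dpsi: "(\<psi> has_real_derivative -(m + (\<psi> t)\<^sup>2)) (at t)" if "t \<in> {0..s}" for t
  proof -
    have c: "cos (x * (t - s/2)) \<noteq> 0" using cpos[OF that] by simp
    have d1: "((\<lambda>t. tan (x * (t - s/2))) has_real_derivative inverse ((cos (x * (t - s/2)))\<^sup>2) * (x * 1)) (at t)"
      by (rule DERIV_chain2[where f=tan and g="\<lambda>t. x * (t - s/2)", OF DERIV_tan[OF c]])
         (auto intro!: derivative_eq_intros)
    have "(\<psi> has_real_derivative -x * (inverse ((cos (x * (t - s/2)))\<^sup>2) * (x * 1))) (at t)"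
      unfolding \<psi>_def by (rule DERIV_cmult[OF d1])
    moreover have "-x * (inverse ((cos (x * (t - s/2)))\<^sup>2) * (x * 1)) = -(m + (\<psi> t)\<^sup>2)"
    proof -
      define w where "w = x * (t - s/2)"
      have c2: "(cos w)\<^sup>2 \<noteq> 0" using c by (simp add: w_def)
      have sc: "(sin w)\<^sup>2 + (cos w)\<^sup>2 = 1" by simp
      have e1: "(x * tan w)\<^sup>2 = m * (sin w)\<^sup>2 / (cos w)\<^sup>2"
        by (simp add: tan_def power_divide power_mult_distrib xx[symmetric] power2_eq_square)
      have e0: "m * (cos w)\<^sup>2 + m * (sin w)\<^sup>2 = m" using sc
        by (metis distrib_left mult.right_neutral add.commute)
      have e2: "m + m * (sin w)\<^sup>2 / (cos w)\<^sup>2 = m / (cos w)\<^sup>2"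
        using c2 e0 by (simp add: field_simps)
      have "-x * (inverse ((cos w)\<^sup>2) * (x * 1)) = -(m + (- x * tan w)\<^sup>2)"
        using e1 e2 sc xx by (simp add: divide_inverse)
      then show ?thesis unfolding \<psi>_def w_def .
    qed
    ultimately show ?thesis by simp
  qed
  define h where "h = (\<lambda>t. \<psi> t * (g t)\<^sup>2)"
  define hd where "hd = (\<lambda>t. -(m + (\<psi> t)\<^sup>2) * (g t)\<^sup>2 + \<psi> t * (2 * g t * g' t))"
  have dh: "(h has_real_derivative hd t) (at t)" if "t \<in> {0..s}" for t
    unfolding h_def hd_def
    by (rule derivative_eq_intros dpsi[OF that] dg refl | simp)+
  have FTC: "(hd has_integral h s - h 0) {0..s}"
    using s dh
    by (intro fundamental_theorem_of_calculus)
       (auto simp: has_real_derivative_iff_has_vector_derivative[symmetric] intro: has_field_derivative_at_within)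
  have gc: "continuous_on UNIV g"
    using dg by (meson DERIV_isCont continuous_at_imp_continuous_on)
  have i1: "(\<lambda>t. (g t)\<^sup>2) integrable_on {0..s}"
    by (intro integrable_continuous_interval continuous_intros continuous_on_subset[OF gc]) auto
  have i2: "(\<lambda>t. (g' t)\<^sup>2) integrable_on {0..s}"
    by (intro integrable_continuous_interval continuous_intros continuous_on_subset[OF cg]) auto
  have le: "h s - h 0 + m * integral {0..s} (\<lambda>t. (g t)\<^sup>2) \<le> integral {0..s} (\<lambda>t. (g' t)\<^sup>2)"
  proof (rule has_integral_le)
    show "((\<lambda>t. hd t + m * (g t)\<^sup>2) has_integral h s - h 0 + m * integral {0..s} (\<lambda>t. (g t)\<^sup>2)) {0..s}"
      by (intro has_integral_add FTC has_integral_mult_right integrable_integral i1)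
    show "((\<lambda>t. (g' t)\<^sup>2) has_integral integral {0..s} (\<lambda>t. (g' t)\<^sup>2)) {0..s}"
      by (intro integrable_integral i2)
    fix t assume "t \<in> {0..s}"
    have "0 \<le> (g' t - \<psi> t * g t)\<^sup>2" by simp
    then show "hd t + m * (g t)\<^sup>2 \<le> (g' t)\<^sup>2"
      unfolding hd_def by (simp add: power2_eq_square algebra_simps)
  qed
  have hs: "h s = - T * (g s)\<^sup>2" by (simp add: h_def \<psi>_def T_def y_def field_simps)
  have h0: "h 0 = T * (g 0)\<^sup>2"
  proof -
    have "x * (0 - s/2) = - y" by (simp add: y_def)
    then show ?thesis by (simp add: h_def \<psi>_def T_def)
  qed
  have "- \<alpha> * ((g 0)\<^sup>2 + (g s)\<^sup>2) \<le> h s - h 0"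
    unfolding hs h0 using Tle by (simp add: algebra_simps add_mono mult_right_mono)
  then show ?thesis using le unfolding m_def[symmetric] by linarith
qed

lemma integrable_cmul_real: "f integrable_on S \<Longrightarrow> (\<lambda>x. (c::real) * f x) integrable_on S"
  using integrable_cmul[of f S c] by simp

lemma cont_slice1: "continuous_on UNIV f \<Longrightarrow> continuous_on UNIV (\<lambda>t. f (t, y::real))"
  by (rule continuous_on_compose2[of UNIV f]) (auto intro!: continuous_intros)
lemma cont_slice2: "continuous_on UNIV f \<Longrightarrow> continuous_on UNIV (\<lambda>t. f (x::real, t))"
  by (rule continuous_on_compose2[of UNIV f]) (auto intro!: continuous_intros)

lemma fub1:
  fixes f :: "real \<times> real \<Rightarrow> real"
  assumes "continuous_on UNIV f"
  shows "integral (cbox (0,0) (s,s)) f = integral {0..s} (\<lambda>x. integral {0..s} (\<lambda>y. f (x,y)))"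
  using integral_prod_continuous[of 0 0 s s f] continuous_on_subset[OF assms] by (simp add: cbox_interval)

lemma fub2:
  fixes f :: "real \<times> real \<Rightarrow> real"
  assumes "continuous_on UNIV f"
  shows "integral (cbox (0,0) (s,s)) f = integral {0..s} (\<lambda>y. integral {0..s} (\<lambda>x. f (x,y)))"
proof -
  have c: "continuous_on (cbox (0, 0) (s, s)) (\<lambda>(x, y). f (x, y))"
    using continuous_on_subset[OF assms] by simp
  show ?thesis using fub1[OF assms, of s] integral_swap_continuous[OF c] by (simp add: cbox_interval)
qed

lemma int1:
  fixes f :: "real \<times> real \<Rightarrow> real"
  assumes "continuous_on UNIV f"
  shows "(\<lambda>x. integral {0..s} (\<lambda>y. f (x,y))) integrable_on {0..s}"
  using integral_integrable_2dim[of 0 0 s s f] continuous_on_subset[OF assms] by (simp add: cbox_interval)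

lemma int2:
  fixes f :: "real \<times> real \<Rightarrow> real"
  assumes "continuous_on UNIV f"
  shows "(\<lambda>y. integral {0..s} (\<lambda>x. f (x,y))) integrable_on {0..s}"
proof -
  have "continuous_on UNIV (\<lambda>q. f (snd q, fst q))"
    by (rule continuous_on_compose2[OF assms]) (auto intro!: continuous_intros)
  from int1[OF this, of s] show ?thesis by simp
qed

lemma robin_square:
  fixes w P Q :: "real \<times> real \<Rightarrow> real" and s \<alpha> :: real
  assumes s: "s > 0" and a: "\<alpha> > 0"
    and dP: "\<And>x y. ((\<lambda>t. w (t, y)) has_real_derivative P (x, y)) (at x)"
    and dQ: "\<And>x y. ((\<lambda>t. w (x, t)) has_real_derivative Q (x, y)) (at y)"
    and cP: "continuous_on UNIV P" and cQ: "continuous_on UNIV Q" and cw: "continuous_on UNIV w"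
  shows "2 * (2*\<alpha>*pi\<^sup>2 / (s * (pi\<^sup>2 + 2*\<alpha> * s))) * integral (cbox (0,0) (s,s)) (\<lambda>p. (w p)\<^sup>2)
          \<le> integral (cbox (0,0) (s,s)) (\<lambda>p. (P p)\<^sup>2 + (Q p)\<^sup>2)
             + \<alpha> * integral {0..s} (\<lambda>t. (w (t,0))\<^sup>2 + (w (t,s))\<^sup>2 + (w (0,t))\<^sup>2 + (w (s,t))\<^sup>2)"
proof -
  define m where "m = 2*\<alpha>*pi\<^sup>2 / (s * (pi\<^sup>2 + 2*\<alpha> * s))"
  have cw2: "continuous_on UNIV (\<lambda>p. (w p)\<^sup>2)" by (intro continuous_intros cw)
  have cP2: "continuous_on UNIV (\<lambda>p. (P p)\<^sup>2)" by (intro continuous_intros cP)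
  have cQ2: "continuous_on UNIV (\<lambda>p. (Q p)\<^sup>2)" by (intro continuous_intros cQ)
  have ciw: "continuous_on UNIV (\<lambda>t. (w (t, y))\<^sup>2)" "continuous_on UNIV (\<lambda>t. (w (y, t))\<^sup>2)" for y
    by (intro continuous_intros cont_slice1 cont_slice2 cw)+
  have iw: "(\<lambda>t. (w (t, y))\<^sup>2) integrable_on {0..s}" "(\<lambda>t. (w (y, t))\<^sup>2) integrable_on {0..s}" for y
    using ciw by (auto intro: integrable_continuous_interval continuous_on_subset)
  have X: "m * integral {0..s} (\<lambda>y. integral {0..s} (\<lambda>x. (w (x,y))\<^sup>2))
      \<le> integral {0..s} (\<lambda>y. integral {0..s} (\<lambda>x. (P (x,y))\<^sup>2)) + \<alpha> * integral {0..s} (\<lambda>y. (w (0,y))\<^sup>2 + (w (s,y))\<^sup>2)"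
  proof -
    have "integral {0..s} (\<lambda>y. m * integral {0..s} (\<lambda>x. (w (x,y))\<^sup>2))
       \<le> integral {0..s} (\<lambda>y. integral {0..s} (\<lambda>x. (P (x,y))\<^sup>2) + \<alpha> * ((w (0,y))\<^sup>2 + (w (s,y))\<^sup>2))"
    proof (rule integral_le)
      show "(\<lambda>y. m * integral {0..s} (\<lambda>x. (w (x,y))\<^sup>2)) integrable_on {0..s}"
        using int2[OF cw2] by (intro integrable_cmul_real) auto
      show "(\<lambda>y. integral {0..s} (\<lambda>x. (P (x,y))\<^sup>2) + \<alpha> * ((w (0,y))\<^sup>2 + (w (s,y))\<^sup>2)) integrable_on {0..s}"
        by (rule integrable_add[OF int2[OF cP2] integrable_cmul_real[OF integrable_add[OF iw(2)[of 0] iw(2)[of s]]]])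
      fix y assume "y \<in> {0..s}"
      show "m * integral {0..s} (\<lambda>x. (w (x,y))\<^sup>2) \<le> integral {0..s} (\<lambda>x. (P (x,y))\<^sup>2) + \<alpha> * ((w (0,y))\<^sup>2 + (w (s,y))\<^sup>2)"
        unfolding m_def using robin1d[OF s a, of "\<lambda>t. w (t,y)" "\<lambda>t. P (t,y)"] dP cont_slice1[OF cP] by simp
    qed
    also have "\<dots> = integral {0..s} (\<lambda>y. integral {0..s} (\<lambda>x. (P (x,y))\<^sup>2)) + \<alpha> * integral {0..s} (\<lambda>y. (w (0,y))\<^sup>2 + (w (s,y))\<^sup>2)"
      using integral_add[OF int2[OF cP2] integrable_cmul_real[OF integrable_add[OF iw(2)[of 0] iw(2)[of s]]]] by simp
    finally show ?thesis by simp
  qed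
  have Y: "m * integral {0..s} (\<lambda>x. integral {0..s} (\<lambda>y. (w (x,y))\<^sup>2))
      \<le> integral {0..s} (\<lambda>x. integral {0..s} (\<lambda>y. (Q (x,y))\<^sup>2)) + \<alpha> * integral {0..s} (\<lambda>x. (w (x,0))\<^sup>2 + (w (x,s))\<^sup>2)"
  proof -
    have "integral {0..s} (\<lambda>x. m * integral {0..s} (\<lambda>y. (w (x,y))\<^sup>2))
       \<le> integral {0..s} (\<lambda>x. integral {0..s} (\<lambda>y. (Q (x,y))\<^sup>2) + \<alpha> * ((w (x,0))\<^sup>2 + (w (x,s))\<^sup>2))"
    proof (rule integral_le)
      show "(\<lambda>x. m * integral {0..s} (\<lambda>y. (w (x,y))\<^sup>2)) integrable_on {0..s}"
        using int1[OF cw2] by (intro integrable_cmul_real) auto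
      show "(\<lambda>x. integral {0..s} (\<lambda>y. (Q (x,y))\<^sup>2) + \<alpha> * ((w (x,0))\<^sup>2 + (w (x,s))\<^sup>2)) integrable_on {0..s}"
        by (rule integrable_add[OF int1[OF cQ2] integrable_cmul_real[OF integrable_add[OF iw(1)[of 0] iw(1)[of s]]]])
      fix x assume "x \<in> {0..s}"
      show "m * integral {0..s} (\<lambda>y. (w (x,y))\<^sup>2) \<le> integral {0..s} (\<lambda>y. (Q (x,y))\<^sup>2) + \<alpha> * ((w (x,0))\<^sup>2 + (w (x,s))\<^sup>2)"
        unfolding m_def using robin1d[OF s a, of "\<lambda>t. w (x,t)" "\<lambda>t. Q (x,t)"] dQ cont_slice2[OF cQ] by simp
    qed
    also have "\<dots> = integral {0..s} (\<lambda>x. integral {0..s} (\<lambda>y. (Q (x,y))\<^sup>2)) + \<alpha> * integral {0..s} (\<lambda>x. (w (x,0))\<^sup>2 + (w (x,s))\<^sup>2)"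
      using integral_add[OF int1[OF cQ2] integrable_cmul_real[OF integrable_add[OF iw(1)[of 0] iw(1)[of s]]]] by simp
    finally show ?thesis by simp
  qed
  have W1: "integral (cbox (0,0) (s,s)) (\<lambda>p. (w p)\<^sup>2) = integral {0..s} (\<lambda>y. integral {0..s} (\<lambda>x. (w (x,y))\<^sup>2))"
    using fub2[OF cw2] by simp
  have W2: "integral (cbox (0,0) (s,s)) (\<lambda>p. (w p)\<^sup>2) = integral {0..s} (\<lambda>x. integral {0..s} (\<lambda>y. (w (x,y))\<^sup>2))"
    using fub1[OF cw2] by simp
  have PQ: "integral (cbox (0,0) (s,s)) (\<lambda>p. (P p)\<^sup>2 + (Q p)\<^sup>2)
     = integral {0..s} (\<lambda>y. integral {0..s} (\<lambda>x. (P (x,y))\<^sup>2)) + integral {0..s} (\<lambda>x. integral {0..s} (\<lambda>y. (Q (x,y))\<^sup>2))"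
  proof -
    have "integral (cbox (0,0) (s,s)) (\<lambda>p. (P p)\<^sup>2 + (Q p)\<^sup>2) = integral (cbox (0,0) (s,s)) (\<lambda>p. (P p)\<^sup>2) + integral (cbox (0,0) (s,s)) (\<lambda>p. (Q p)\<^sup>2)"
      by (rule integral_add[OF integrable_continuous[OF continuous_on_subset[OF cP2 subset_UNIV]] integrable_continuous[OF continuous_on_subset[OF cQ2 subset_UNIV]]])
    then show ?thesis using fub2[OF cP2] fub1[OF cQ2] by simp
  qed
  have B: "integral {0..s} (\<lambda>t. (w (t,0))\<^sup>2 + (w (t,s))\<^sup>2 + (w (0,t))\<^sup>2 + (w (s,t))\<^sup>2)
     = integral {0..s} (\<lambda>y. (w (0,y))\<^sup>2 + (w (s,y))\<^sup>2) + integral {0..s} (\<lambda>x. (w (x,0))\<^sup>2 + (w (x,s))\<^sup>2)"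
  proof -
    have "integral {0..s} (\<lambda>t. ((w (t,0))\<^sup>2 + (w (t,s))\<^sup>2) + ((w (0,t))\<^sup>2 + (w (s,t))\<^sup>2))
      = integral {0..s} (\<lambda>x. (w (x,0))\<^sup>2 + (w (x,s))\<^sup>2) + integral {0..s} (\<lambda>y. (w (0,y))\<^sup>2 + (w (s,y))\<^sup>2)"
      using iw by (intro integral_add integrable_add) auto
    then show ?thesis by (simp add: add.assoc)
  qed
  have X': "m * integral (cbox (0,0) (s,s)) (\<lambda>p. (w p)\<^sup>2)
      \<le> integral {0..s} (\<lambda>y. integral {0..s} (\<lambda>x. (P (x,y))\<^sup>2)) + \<alpha> * integral {0..s} (\<lambda>y. (w (0,y))\<^sup>2 + (w (s,y))\<^sup>2)"
    using X unfolding W1[symmetric] .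
  have Y': "m * integral (cbox (0,0) (s,s)) (\<lambda>p. (w p)\<^sup>2)
      \<le> integral {0..s} (\<lambda>x. integral {0..s} (\<lambda>y. (Q (x,y))\<^sup>2)) + \<alpha> * integral {0..s} (\<lambda>x. (w (x,0))\<^sup>2 + (w (x,s))\<^sup>2)"
    using Y unfolding W2[symmetric] .
  have "2 * m * integral (cbox (0,0) (s,s)) (\<lambda>p. (w p)\<^sup>2)
          \<le> integral (cbox (0,0) (s,s)) (\<lambda>p. (P p)\<^sup>2 + (Q p)\<^sup>2)
             + \<alpha> * integral {0..s} (\<lambda>t. (w (t,0))\<^sup>2 + (w (t,s))\<^sup>2 + (w (0,t))\<^sup>2 + (w (s,t))\<^sup>2)"
    unfolding PQ B distrib_left using X' Y' by linarith
  then show ?thesis unfolding m_def .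
qed

definition D1 :: "(pt \<Rightarrow> real) \<Rightarrow> pt \<Rightarrow> real" where
  "D1 u p = frechet_derivative u (at p) (1,0)"
definition D2 :: "(pt \<Rightarrow> real) \<Rightarrow> pt \<Rightarrow> real" where
  "D2 u p = frechet_derivative u (at p) (0,1)"

lemma box_pair_real: "box ((a::real),(c::real)) (b,d) = {(x,y::real). a<x \<and> x<b \<and> c<y \<and> y<(d::real)}"
  by (auto simp: mem_box Basis_prod_def inner_Pair)

lemma C1_partial1:
  assumes "C1_fun u"
  shows "((\<lambda>t. u (t, y)) has_real_derivative D1 u (x, y)) (at x)"
proof -
  have "u differentiable (at (x,y))" using assms unfolding C1_fun_def differentiable_on_def by simp
  then have du: "(u has_derivative frechet_derivative u (at (x,y))) (at (x,y))"
    using frechet_derivative_works by blast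
  have lin: "linear (frechet_derivative u (at (x,y)))" using du has_derivative_linear by blast
  have dp: "((\<lambda>t. (t, y)) has_derivative (\<lambda>h. (h, 0))) (at x)"
    by (auto intro!: derivative_eq_intros)
  have "((u \<circ> (\<lambda>t. (t, y))) has_derivative (frechet_derivative u (at (x,y)) \<circ> (\<lambda>h. (h, 0)))) (at x)"
    by (rule diff_chain_at[OF dp]) (use du in simp)
  moreover have "(frechet_derivative u (at (x,y)) \<circ> (\<lambda>h. (h, 0))) = (\<lambda>h. h * D1 u (x,y))"
  proof
    fix h :: real
    have "(h, 0::real) = h *\<^sub>R (1, 0)" by simp
    then show "(frechet_derivative u (at (x,y)) \<circ> (\<lambda>h. (h, 0))) h = h * D1 u (x,y)"
      using linear_scale[OF lin, of h "(1,0)"] by (simp add: D1_def)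
  qed
  ultimately have "((\<lambda>t. u (t, y)) has_derivative (\<lambda>h. h * D1 u (x,y))) (at x)" by (simp add: o_def)
  moreover have "(*) (D1 u (x,y)) = (\<lambda>h. h * D1 u (x,y))" by (auto simp: fun_eq_iff)
  ultimately show ?thesis unfolding has_field_derivative_def by simp
qed

lemma C1_partial2:
  assumes "C1_fun u"
  shows "((\<lambda>t. u (x, t)) has_real_derivative D2 u (x, y)) (at y)"
proof -
  have "u differentiable (at (x,y))" using assms unfolding C1_fun_def differentiable_on_def by simp
  then have du: "(u has_derivative frechet_derivative u (at (x,y))) (at (x,y))"
    using frechet_derivative_works by blast
  have lin: "linear (frechet_derivative u (at (x,y)))" using du has_derivative_linear by blast
  have dp: "((\<lambda>t. (x, t)) has_derivative (\<lambda>h. (0, h))) (at y)"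
    by (auto intro!: derivative_eq_intros)
  have "((u \<circ> (\<lambda>t. (x, t))) has_derivative (frechet_derivative u (at (x,y)) \<circ> (\<lambda>h. (0, h)))) (at y)"
    by (rule diff_chain_at[OF dp]) (use du in simp)
  moreover have "(frechet_derivative u (at (x,y)) \<circ> (\<lambda>h. (0, h))) = (\<lambda>h. h * D2 u (x,y))"
  proof
    fix h :: real
    have "(0::real, h) = h *\<^sub>R (0, 1)" by simp
    then show "(frechet_derivative u (at (x,y)) \<circ> (\<lambda>h. (0, h))) h = h * D2 u (x,y)"
      using linear_scale[OF lin, of h "(0,1)"] by (simp add: D2_def)
  qed
  ultimately have "((\<lambda>t. u (x, t)) has_derivative (\<lambda>h. h * D2 u (x,y))) (at y)" by (simp add: o_def)
  moreover have "(*) (D2 u (x,y)) = (\<lambda>h. h * D2 u (x,y))" by (auto simp: fun_eq_iff)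
  ultimately show ?thesis unfolding has_field_derivative_def by simp
qed

lemma C1_cont:
  assumes "C1_fun u"
  shows "continuous_on UNIV u" "continuous_on UNIV (D1 u)" "continuous_on UNIV (D2 u)"
  using assms unfolding C1_fun_def D1_def[abs_def] D2_def[abs_def]
  by (auto intro: differentiable_imp_continuous_on)

lemma cell_eq: "sq_cell s i = box (2 * real i * s, 0) (2 * real i * s + s, s)"
  unfolding sq_cell_def box_pair_real by simp

lemma cell_integral:
  fixes f :: "pt \<Rightarrow> real"
  shows "integral (sq_cell s i) f = integral (cbox (0,0) (s,s)) (\<lambda>p. f (p + (2 * real i * s, 0)))"
proof -
  let ?a = "2 * real i * s"
  have "integral (sq_cell s i) f = integral (cbox (?a, 0) (?a + s, s)) f"
    unfolding cell_eq integral_open_interval ..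
  also have "\<dots> = integral (cbox ((?a, 0) - (?a,0)) ((?a + s, s) - (?a, 0))) (\<lambda>p. f (p + (?a, 0)))"
    by (rule integral_shift_cbox[symmetric])
  finally show ?thesis by (simp add: zero_prod_def)
qed

lemma cell_integrable:
  fixes f :: "pt \<Rightarrow> real"
  assumes "continuous_on UNIV f"
  shows "f integrable_on sq_cell s i"
  unfolding cell_eq integrable_on_open_interval
  by (rule integrable_continuous[OF continuous_on_subset[OF assms]]) auto

lemma robin_cell:
  fixes v :: "pt \<Rightarrow> real"
  assumes v: "C1_fun v" and s: "s > 0" and a: "\<alpha> > 0"
  shows "2 * (2*\<alpha>*pi\<^sup>2 / (s * (pi\<^sup>2 + 2*\<alpha> * s))) * integral (sq_cell s i) (\<lambda>p. (v p)\<^sup>2)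
          \<le> integral (sq_cell s i) (\<lambda>p. (D1 v p)\<^sup>2 + (D2 v p)\<^sup>2)
             + \<alpha> * integral {0..s} (\<lambda>t. (v (2 * real i * s + t, 0))\<^sup>2 + (v (2 * real i * s + t, s))\<^sup>2
                 + (v (2 * real i * s, t))\<^sup>2 + (v (2 * real i * s + s, t))\<^sup>2)"
proof -
  let ?a = "2 * real i * s"
  define w where "w = (\<lambda>p. v (p + (?a, 0)))"
  define P where "P = (\<lambda>p. D1 v (p + (?a, 0)))"
  define Q where "Q = (\<lambda>p. D2 v (p + (?a, 0)))"
  have cs: "continuous_on UNIV (\<lambda>p::pt. p + (?a, 0))" by (intro continuous_intros)
  have dP: "((\<lambda>t. w (t, y)) has_real_derivative P (x, y)) (at x)" for x y
  proof -
    have "((\<lambda>t. v (t, y)) has_real_derivative D1 v (x + ?a, y)) (at (x + ?a))"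
      by (rule C1_partial1[OF v])
    then show ?thesis unfolding w_def P_def by (simp add: DERIV_shift)
  qed
  have dQ: "((\<lambda>t. w (x, t)) has_real_derivative Q (x, y)) (at y)" for x y
  proof -
    have "((\<lambda>t. v (x + ?a, t)) has_real_derivative D2 v (x + ?a, y)) (at y)"
      by (rule C1_partial2[OF v])
    then show ?thesis unfolding w_def Q_def by simp
  qed
  have cw: "continuous_on UNIV w" unfolding w_def
    by (rule continuous_on_compose2[OF C1_cont(1)[OF v] cs]) auto
  have cP: "continuous_on UNIV P" unfolding P_def
    by (rule continuous_on_compose2[OF C1_cont(2)[OF v] cs]) auto
  have cQ: "continuous_on UNIV Q" unfolding Q_def
    by (rule continuous_on_compose2[OF C1_cont(3)[OF v] cs]) auto
  note main = robin_square[OF s a dP dQ cP cQ cw]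
  have e1: "integral (sq_cell s i) (\<lambda>p. (v p)\<^sup>2) = integral (cbox (0,0) (s,s)) (\<lambda>p. (w p)\<^sup>2)"
    unfolding cell_integral w_def ..
  have e2: "integral (sq_cell s i) (\<lambda>p. (D1 v p)\<^sup>2 + (D2 v p)\<^sup>2) = integral (cbox (0,0) (s,s)) (\<lambda>p. (P p)\<^sup>2 + (Q p)\<^sup>2)"
    unfolding cell_integral P_def Q_def ..
  have e3: "(\<lambda>t. (w (t,0))\<^sup>2 + (w (t,s))\<^sup>2 + (w (0,t))\<^sup>2 + (w (s,t))\<^sup>2)
     = (\<lambda>t. (v (?a + t, 0))\<^sup>2 + (v (?a + t, s))\<^sup>2 + (v (?a, t))\<^sup>2 + (v (?a + s, t))\<^sup>2)"
    unfolding w_def by (simp add: add.commute)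
  show ?thesis using main unfolding e1 e2 e3 .
qed

lemma cells_disjoint:
  assumes "s > 0" "i \<noteq> j"
  shows "sq_cell s i \<inter> sq_cell s j = {}"
proof -
  have *: "sq_cell s i \<inter> sq_cell s j = {}" if "i < j" for i j :: nat
  proof -
    have "real i + 1 \<le> real j" using that by simp
    then have "(real i + 1) * (2 * s) \<le> real j * (2 * s)" using assms(1) by (intro mult_right_mono) auto
    then have "2 * real i * s + s < 2 * real j * s" using assms(1) by (simp add: algebra_simps)
    then show ?thesis unfolding sq_cell_def by auto
  qed
  show ?thesis
  proof (cases "i < j")
    case True then show ?thesis using * by blast
  next
    case False then have "j < i" using assms(2) by simp
    then show ?thesis using *[of j i] by blast
  qed
qed

lemma union_has_integral:
  fixes f :: "pt \<Rightarrow> real"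
  assumes "continuous_on UNIV f" "s > 0"
  shows "(f has_integral (\<Sum>i<k. integral (sq_cell s i) f)) (\<Union>i<k. sq_cell s i)"
proof (rule has_integral_UN)
  show "\<And>i. i \<in> {..<k} \<Longrightarrow> (f has_integral integral (sq_cell s i) f) (sq_cell s i)"
    using cell_integrable[OF assms(1)] by (blast intro: integrable_integral)
  show "pairwise (\<lambda>i i'. negligible (sq_cell s i \<inter> sq_cell s i')) {..<k}"
    unfolding pairwise_def using cells_disjoint[OF assms(2)] by simp
qed simp

lemma union_integral:
  fixes f :: "pt \<Rightarrow> real"
  assumes "continuous_on UNIV f" "s > 0"
  shows "integral (\<Union>i<k. sq_cell s i) f = (\<Sum>i<k. integral (sq_cell s i) f)"
  using union_has_integral[OF assms] by (rule integral_unique)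

lemma union_integrable:
  fixes f :: "pt \<Rightarrow> real"
  assumes "continuous_on UNIV f" "s > 0"
  shows "f integrable_on (\<Union>i<k. sq_cell s i)"
  using union_has_integral[OF assms] by blast

lemma C1_sum:
  assumes "\<And>i. i < k \<Longrightarrow> C1_fun (u i)"
  shows "C1_fun (\<lambda>x. \<Sum>i<k. c i * u i x)"
    and "D1 (\<lambda>x. \<Sum>i<k. c i * u i x) = (\<lambda>p. \<Sum>i<k. c i * D1 (u i) p)"
    and "D2 (\<lambda>x. \<Sum>i<k. c i * u i x) = (\<lambda>p. \<Sum>i<k. c i * D2 (u i) p)"
proof -
  have du: "(u i has_derivative frechet_derivative (u i) (at p)) (at p)" if "i < k" for i p
    using assms[OF that] unfolding C1_fun_def differentiable_on_def
    using frechet_derivative_works by blast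
  have ds: "((\<lambda>x. \<Sum>i<k. c i * u i x) has_derivative (\<lambda>h. \<Sum>i<k. c i * frechet_derivative (u i) (at p) h)) (at p)" for p
    by (intro has_derivative_sum has_derivative_mult_right du) simp
  have fd: "frechet_derivative (\<lambda>x. \<Sum>i<k. c i * u i x) (at p) = (\<lambda>h. \<Sum>i<k. c i * frechet_derivative (u i) (at p) h)" for p
    using frechet_derivative_at[OF ds] by simp
  show e1: "D1 (\<lambda>x. \<Sum>i<k. c i * u i x) = (\<lambda>p. \<Sum>i<k. c i * D1 (u i) p)"
    unfolding D1_def fd by simp
  show e2: "D2 (\<lambda>x. \<Sum>i<k. c i * u i x) = (\<lambda>p. \<Sum>i<k. c i * D2 (u i) p)"
    unfolding D2_def fd by simp
  have c1: "continuous_on UNIV (D1 (u i))" "continuous_on UNIV (D2 (u i))" if "i < k" for i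
    using C1_cont[OF assms[OF that]] by auto
  show "C1_fun (\<lambda>x. \<Sum>i<k. c i * u i x)"
    unfolding C1_fun_def
  proof (intro conjI)
    show "(\<lambda>x. \<Sum>i<k. c i * u i x) differentiable_on UNIV"
      unfolding differentiable_on_def differentiable_def using ds by blast
    show "continuous_on UNIV (\<lambda>x. frechet_derivative (\<lambda>x. \<Sum>i<k. c i * u i x) (at x) (1, 0))"
    proof -
      have "continuous_on UNIV (D1 (\<lambda>x. \<Sum>i<k. c i * u i x))" unfolding e1 using c1(1) by (auto intro!: continuous_intros)
      then show ?thesis unfolding D1_def[abs_def] .
    qed
    show "continuous_on UNIV (\<lambda>x. frechet_derivative (\<lambda>x. \<Sum>i<k. c i * u i x) (at x) (0, 1))"
    proof -
      have "continuous_on UNIV (D2 (\<lambda>x. \<Sum>i<k. c i * u i x))" unfolding e2 using c1(2) by (auto intro!: continuous_intros)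
      then show ?thesis unfolding D2_def[abs_def] .
    qed
  qed
qed

lemma side_pos: "A > 0 \<Longrightarrow> k \<ge> 1 \<Longrightarrow> sq_side A k > 0"
  unfolding sq_side_def by simp

lemma LB_S:
  fixes v :: "pt \<Rightarrow> real"
  assumes A: "A > 0" and k: "k \<ge> 1" and a: "\<alpha> > 0" and v: "C1_fun v"
  defines "s \<equiv> sq_side A k"
  shows "2 * (2*\<alpha>*pi\<^sup>2 / (s * (pi\<^sup>2 + 2*\<alpha> * s))) * integral (S_union A k) (\<lambda>p. (v p)\<^sup>2)
          \<le> dirichlet (S_union A k) v + \<alpha> * S_bint A k (\<lambda>x. (v x)\<^sup>2)"
proof -
  define m2 where "m2 = 2 * (2*\<alpha>*pi\<^sup>2 / (s * (pi\<^sup>2 + 2*\<alpha> * s)))"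
  have s: "s > 0" unfolding s_def using side_pos[OF A k] .
  have cv2: "continuous_on UNIV (\<lambda>p. (v p)\<^sup>2)" using C1_cont[OF v] by (auto intro!: continuous_intros)
  have cd: "continuous_on UNIV (\<lambda>p. (D1 v p)\<^sup>2 + (D2 v p)\<^sup>2)" using C1_cont[OF v] by (auto intro!: continuous_intros)
  have Su: "S_union A k = (\<Union>i<k. sq_cell s i)" unfolding S_union_def s_def ..
  have dir: "dirichlet (S_union A k) v = (\<Sum>i<k. integral (sq_cell s i) (\<lambda>p. (D1 v p)\<^sup>2 + (D2 v p)\<^sup>2))"
    unfolding dirichlet_def Su D1_def[symmetric] D2_def[symmetric] using union_integral[OF cd s] by simp
  have L2: "integral (S_union A k) (\<lambda>p. (v p)\<^sup>2) = (\<Sum>i<k. integral (sq_cell s i) (\<lambda>p. (v p)\<^sup>2))"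
    unfolding Su using union_integral[OF cv2 s] .
  have bint: "S_bint A k (\<lambda>x. (v x)\<^sup>2) = (\<Sum>i<k. integral {0..s} (\<lambda>t. (v (2 * real i * s + t, 0))\<^sup>2 + (v (2 * real i * s + t, s))\<^sup>2
                 + (v (2 * real i * s, t))\<^sup>2 + (v (2 * real i * s + s, t))\<^sup>2))"
    unfolding S_bint_def s_def Let_def ..
  have "m2 * integral (S_union A k) (\<lambda>p. (v p)\<^sup>2) = (\<Sum>i<k. m2 * integral (sq_cell s i) (\<lambda>p. (v p)\<^sup>2))"
    unfolding L2 sum_distrib_left ..
  also have "\<dots> \<le> (\<Sum>i<k. integral (sq_cell s i) (\<lambda>p. (D1 v p)\<^sup>2 + (D2 v p)\<^sup>2)
             + \<alpha> * integral {0..s} (\<lambda>t. (v (2 * real i * s + t, 0))\<^sup>2 + (v (2 * real i * s + t, s))\<^sup>2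
                 + (v (2 * real i * s, t))\<^sup>2 + (v (2 * real i * s + s, t))\<^sup>2))"
    unfolding m2_def by (intro sum_mono robin_cell[OF v s a])
  also have "\<dots> = dirichlet (S_union A k) v + \<alpha> * S_bint A k (\<lambda>x. (v x)\<^sup>2)"
    unfolding dir bint sum.distrib sum_distrib_left ..
  finally show ?thesis unfolding m2_def .
qed

definition qf :: "nat \<Rightarrow> (nat \<Rightarrow> 'a::euclidean_space \<Rightarrow> real) \<Rightarrow> 'a set \<Rightarrow> (nat \<Rightarrow> real) \<Rightarrow> real" where
  "qf k g T c = integral T (\<lambda>x. (\<Sum>i<k. c i * g i x)\<^sup>2)"

lemma qf_expand:
  assumes "\<And>i j. i < k \<Longrightarrow> j < k \<Longrightarrow> (\<lambda>x. g i x * g j x) integrable_on T"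
  shows "qf k g T c = (\<Sum>i<k. \<Sum>j<k. c i * c j * integral T (\<lambda>x. g i x * g j x))"
proof -
  have "(\<lambda>x. (\<Sum>i<k. c i * g i x)\<^sup>2) = (\<lambda>x. \<Sum>i<k. \<Sum>j<k. (c i * c j) * (g i x * g j x))"
    by (auto simp: power2_eq_square sum_product algebra_simps)
  then have "qf k g T c = integral T (\<lambda>x. \<Sum>i<k. \<Sum>j<k. (c i * c j) * (g i x * g j x))"
    unfolding qf_def by simp
  also have "\<dots> = (\<Sum>i<k. integral T (\<lambda>x. \<Sum>j<k. (c i * c j) * (g i x * g j x)))"
    using assms by (intro integral_sum) (auto intro!: integrable_sum integrable_cmul_real)
  also have "\<dots> = (\<Sum>i<k. \<Sum>j<k. integral T (\<lambda>x. (c i * c j) * (g i x * g j x)))"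
    using assms by (intro sum.cong refl integral_sum) (auto intro!: integrable_cmul_real)
  also have "\<dots> = (\<Sum>i<k. \<Sum>j<k. c i * c j * integral T (\<lambda>x. g i x * g j x))"
    by simp
  finally show ?thesis .
qed

lemma qf_cont:
  assumes "\<And>i j. i < k \<Longrightarrow> j < k \<Longrightarrow> (\<lambda>x. g i x * g j x) integrable_on T"
  shows "continuous_on UNIV (qf k g T)"
proof -
  have "qf k g T = (\<lambda>c. \<Sum>i<k. \<Sum>j<k. c i * c j * integral T (\<lambda>x. g i x * g j x))"
    using qf_expand[OF assms] by auto
  then show ?thesis by (auto intro!: continuous_intros continuous_on_product_coordinates)
qed

lemma qf_scale: "qf k g T (\<lambda>i. t * c i) = t\<^sup>2 * qf k g T c"
proof -
  have "(\<lambda>x. (\<Sum>i<k. (t * c i) * g i x)\<^sup>2) = (\<lambda>x. t\<^sup>2 * (\<Sum>i<k. c i * g i x)\<^sup>2)"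
    by (auto simp: power_mult_distrib sum_distrib_left[symmetric] mult.assoc)
  then show ?thesis unfolding qf_def by simp
qed

lemma qf_cong: "(\<And>i. i < k \<Longrightarrow> c i = c' i) \<Longrightarrow> qf k g T c = qf k g T c'"
  unfolding qf_def by (metis (no_types, lifting) lessThan_iff sum.cong)

lemma qf_nonneg: "qf k g T c \<ge> 0 \<or> \<not> (\<lambda>x. (\<Sum>i<k. c i * g i x)\<^sup>2) integrable_on T"
  unfolding qf_def by (auto intro: integral_nonneg)

definition Nf :: "real \<Rightarrow> nat \<Rightarrow> real \<Rightarrow> (nat \<Rightarrow> pt \<Rightarrow> real) \<Rightarrow> (nat \<Rightarrow> real) \<Rightarrow> real" where
  "Nf A k \<alpha> u c = (let s = sq_side A k in
     qf k (\<lambda>i. D1 (u i)) (S_union A k) c + qf k (\<lambda>i. D2 (u i)) (S_union A k) c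
      + \<alpha> * (\<Sum>j<k. qf k (\<lambda>i t. u i (2 * real j * s + t, 0)) {0..s} c + qf k (\<lambda>i t. u i (2 * real j * s + t, s)) {0..s} c
                  + qf k (\<lambda>i t. u i (2 * real j * s, t)) {0..s} c + qf k (\<lambda>i t. u i (2 * real j * s + s, t)) {0..s} c))"

lemma cont_shift1: "continuous_on UNIV f \<Longrightarrow> continuous_on UNIV (\<lambda>t. f ((a::real) + t, b::real))"
proof -
  assume f: "continuous_on UNIV f"
  have "continuous_on UNIV (\<lambda>t::real. (a + t, b))" by (intro continuous_intros)
  then show ?thesis by (rule continuous_on_compose2[OF f]) auto
qed

lemma cont_int_interval: "continuous_on UNIV (f::real\<Rightarrow>real) \<Longrightarrow> f integrable_on {a..b}"
  by (rule integrable_continuous_interval[OF continuous_on_subset]) auto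

lemma N_rep:
  assumes A: "A > 0" and k: "k \<ge> 1" and u: "\<And>i. i < k \<Longrightarrow> C1_fun (u i)"
  shows "dirichlet (S_union A k) (\<lambda>x. \<Sum>i<k. c i * u i x) + \<alpha> * S_bint A k (\<lambda>x. (\<Sum>i<k. c i * u i x)\<^sup>2)
         = Nf A k \<alpha> u c"
proof -
  define s where "s = sq_side A k"
  have s: "s > 0" unfolding s_def using side_pos[OF A k] .
  have Su: "S_union A k = (\<Union>i<k. sq_cell s i)" unfolding S_union_def s_def ..
  let ?v = "\<lambda>x. \<Sum>i<k. c i * u i x"
  have cu: "continuous_on UNIV (u i)" "continuous_on UNIV (D1 (u i))" "continuous_on UNIV (D2 (u i))" if "i < k" for i
    using C1_cont[OF u[OF that]] by auto
  have cD1: "continuous_on UNIV (\<lambda>p. (\<Sum>i<k. c i * D1 (u i) p)\<^sup>2)"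
    using cu by (auto intro!: continuous_intros)
  have cD2: "continuous_on UNIV (\<lambda>p. (\<Sum>i<k. c i * D2 (u i) p)\<^sup>2)"
    using cu by (auto intro!: continuous_intros)
  have dir: "dirichlet (S_union A k) ?v = qf k (\<lambda>i. D1 (u i)) (S_union A k) c + qf k (\<lambda>i. D2 (u i)) (S_union A k) c"
  proof -
    have "dirichlet (S_union A k) ?v = integral (S_union A k) (\<lambda>p. (D1 ?v p)\<^sup>2 + (D2 ?v p)\<^sup>2)"
      unfolding dirichlet_def D1_def D2_def ..
    also have "\<dots> = integral (S_union A k) (\<lambda>p. (\<Sum>i<k. c i * D1 (u i) p)\<^sup>2 + (\<Sum>i<k. c i * D2 (u i) p)\<^sup>2)"
      by (simp only: C1_sum(2,3)[OF u])
    also have "\<dots> = integral (S_union A k) (\<lambda>p. (\<Sum>i<k. c i * D1 (u i) p)\<^sup>2) + integral (S_union A k) (\<lambda>p. (\<Sum>i<k. c i * D2 (u i) p)\<^sup>2)"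
      unfolding Su by (rule integral_add[OF union_integrable[OF cD1 s] union_integrable[OF cD2 s]])
    finally show ?thesis unfolding qf_def .
  qed
  have cb: "continuous_on UNIV (\<lambda>t. (\<Sum>i<k. c i * u i (a + t, b))\<^sup>2)" "continuous_on UNIV (\<lambda>t. (\<Sum>i<k. c i * u i (a, t))\<^sup>2)" for a b
    using cu by (auto intro!: continuous_intros cont_shift1 cont_slice2)
  have bint: "S_bint A k (\<lambda>x. (?v x)\<^sup>2) = (\<Sum>j<k. qf k (\<lambda>i t. u i (2 * real j * s + t, 0)) {0..s} c + qf k (\<lambda>i t. u i (2 * real j * s + t, s)) {0..s} c
                  + qf k (\<lambda>i t. u i (2 * real j * s, t)) {0..s} c + qf k (\<lambda>i t. u i (2 * real j * s + s, t)) {0..s} c)"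
    unfolding S_bint_def Let_def s_def[symmetric]
  proof (rule sum.cong[OF refl])
    fix j
    let ?a = "2 * real j * s"
    show "integral {0..s} (\<lambda>t. (?v (?a + t, 0))\<^sup>2 + (?v (?a + t, s))\<^sup>2 + (?v (?a, t))\<^sup>2 + (?v (?a + s, t))\<^sup>2)
       = qf k (\<lambda>i t. u i (?a + t, 0)) {0..s} c + qf k (\<lambda>i t. u i (?a + t, s)) {0..s} c
                  + qf k (\<lambda>i t. u i (?a, t)) {0..s} c + qf k (\<lambda>i t. u i (?a + s, t)) {0..s} c"
      unfolding qf_def
      by (subst integral_add integral_add integral_add; (intro integrable_add cont_int_interval cb)?)+ simp
  qed
  show ?thesis unfolding dir bint Nf_def Let_def s_def ..
qed

lemma prod_int_S:
  fixes f g :: "pt \<Rightarrow> real"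
  assumes "continuous_on UNIV f" "continuous_on UNIV g" "A > 0" "k \<ge> 1"
  shows "(\<lambda>x. f x * g x) integrable_on S_union A k"
  unfolding S_union_def
  by (rule union_integrable[OF _ side_pos[OF assms(3,4)]]) (intro continuous_intros assms(1,2))

lemma Nf_cont:
  assumes A: "A > 0" and k: "k \<ge> 1" and u: "\<And>i. i < k \<Longrightarrow> C1_fun (u i)"
  shows "continuous_on UNIV (Nf A k \<alpha> u)"
proof -
  have cu: "continuous_on UNIV (u i)" "continuous_on UNIV (D1 (u i))" "continuous_on UNIV (D2 (u i))" if "i < k" for i
    using C1_cont[OF u[OF that]] by auto
  show ?thesis
    unfolding Nf_def[abs_def] Let_def
    by (intro continuous_intros qf_cont prod_int_S A k cu cont_int_interval cont_shift1 cont_slice2; assumption)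
qed

lemma Dn_cont:
  assumes A: "A > 0" and k: "k \<ge> 1" and u: "\<And>i. i < k \<Longrightarrow> C1_fun (u i)"
  shows "continuous_on UNIV (qf k u (S_union A k))"
  using C1_cont[OF u] by (intro qf_cont prod_int_S A k) auto

lemma Nf_scale: "Nf A k \<alpha> u (\<lambda>i. t * c i) = t\<^sup>2 * Nf A k \<alpha> u c"
  unfolding Nf_def Let_def qf_scale by (simp add: algebra_simps sum_distrib_left)

lemma Nf_cong: "(\<And>i. i < k \<Longrightarrow> c i = c' i) \<Longrightarrow> Nf A k \<alpha> u c = Nf A k \<alpha> u c'"
  unfolding Nf_def Let_def by (simp add: qf_cong[of k c c'])

lemma rayleigh_rep:
  assumes A: "A > 0" and k: "k \<ge> 1" and u: "\<And>i. i < k \<Longrightarrow> C1_fun (u i)"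
  shows "robin_rayleigh (S_union A k) (S_bint A k) \<alpha> (\<lambda>x. \<Sum>i<k. c i * u i x) = Nf A k \<alpha> u c / qf k u (S_union A k) c"
  unfolding robin_rayleigh_def qf_def using N_rep[where A=A and k=k and u=u and c=c and \<alpha>=\<alpha>, OF A k u] by simp

lemma Dn_pos:
  assumes A: "A > 0" and k: "k \<ge> 1" and u: "\<And>i. i < k \<Longrightarrow> C1_fun (u i)"
    and ind: "\<forall>c. integral (S_union A k) (\<lambda>x. (\<Sum>i<k. c i * u i x)\<^sup>2) = 0 \<longrightarrow> (\<forall>i<k. c i = 0)"
    and c: "\<exists>i<k. c i \<noteq> 0"
  shows "qf k u (S_union A k) c > 0"
proof -
  have cv: "continuous_on UNIV (\<lambda>x. \<Sum>i<k. c i * u i x)"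
    using C1_cont(1)[OF u] by (auto intro!: continuous_intros)
  have "qf k u (S_union A k) c \<ge> 0"
    unfolding qf_def using prod_int_S[OF cv cv A k]
    by (intro integral_nonneg) (auto simp: power2_eq_square)
  moreover have "qf k u (S_union A k) c \<noteq> 0" using ind c unfolding qf_def by blast
  ultimately show ?thesis by simp
qed

lemma rayleigh_lower:
  assumes A: "A > 0" and k: "k \<ge> 1" and a: "\<alpha> > 0" and u: "\<And>i. i < k \<Longrightarrow> C1_fun (u i)"
    and ind: "\<forall>c. integral (S_union A k) (\<lambda>x. (\<Sum>i<k. c i * u i x)\<^sup>2) = 0 \<longrightarrow> (\<forall>i<k. c i = 0)"
    and c: "\<exists>i<k. c i \<noteq> 0"
  shows "2 * (2*\<alpha>*pi\<^sup>2 / (sq_side A k * (pi\<^sup>2 + 2*\<alpha> * sq_side A k)))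
         \<le> robin_rayleigh (S_union A k) (S_bint A k) \<alpha> (\<lambda>x. \<Sum>i<k. c i * u i x)"
proof -
  have D: "qf k u (S_union A k) c > 0" by (rule Dn_pos[OF A k u ind c])
  have "2 * (2*\<alpha>*pi\<^sup>2 / (sq_side A k * (pi\<^sup>2 + 2*\<alpha> * sq_side A k))) * qf k u (S_union A k) c \<le> Nf A k \<alpha> u c"
  proof -
    have v: "C1_fun (\<lambda>x. \<Sum>i<k. c i * u i x)" by (rule C1_sum(1)) (erule u)
    show ?thesis
      using LB_S[OF A k a v] N_rep[where A=A and k=k and u=u and c=c and \<alpha>=\<alpha>, OF A k u] unfolding qf_def by simp
  qed
  then have "2 * (2*\<alpha>*pi\<^sup>2 / (sq_side A k * (pi\<^sup>2 + 2*\<alpha> * sq_side A k))) \<le> Nf A k \<alpha> u c / qf k u (S_union A k) c"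
    by (subst pos_le_divide_eq[OF D])
  then show ?thesis using rayleigh_rep[where A=A and k=k and u=u and c=c and \<alpha>=\<alpha>, OF A k u] by simp
qed

lemma compact_K:
  "compact {c::nat\<Rightarrow>real. (\<forall>i. k \<le> i \<longrightarrow> c i = 0) \<and> (\<Sum>i<k. (c i)\<^sup>2) = 1}"
proof -
  define B where "B = PiE UNIV (\<lambda>i::nat. if i < k then {-1..1::real} else {0})"
  define K where "K = {c::nat\<Rightarrow>real. (\<forall>i. k \<le> i \<longrightarrow> c i = 0) \<and> (\<Sum>i<k. (c i)\<^sup>2) = 1}"
  have "compactin (product_topology (\<lambda>i. euclidean) UNIV) B"
    unfolding B_def compactin_PiE by auto
  then have cB: "compact B" unfolding euclidean_product_topology compactin_euclidean_iff .
  have "K = (\<Inter>i\<in>{k..}. {c. c i = 0}) \<inter> {c. (\<Sum>i<k. (c i)\<^sup>2) = 1}"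
    unfolding K_def by auto
  moreover have "closed ((\<Inter>i\<in>{k..}. {c::nat\<Rightarrow>real. c i = 0}) \<inter> {c. (\<Sum>i<k. (c i)\<^sup>2) = 1})"
    by (intro closed_Int closed_INT ballI closed_Collect_eq continuous_intros continuous_on_product_coordinates)
  ultimately have clK: "closed K" by simp
  have sub: "K \<subseteq> B"
  proof
    fix c assume cK: "c \<in> K"
    have "c i \<in> (if i < k then {-1..1} else {0})" for i
    proof (cases "i < k")
      case True
      have "(c i)\<^sup>2 \<le> (\<Sum>j<k. (c j)\<^sup>2)" using True by (intro member_le_sum) auto
      then have "(c i)\<^sup>2 \<le> 1" using cK unfolding K_def by simp
      then have "\<bar>c i\<bar> \<le> 1" using abs_square_le_1 by blast
      then show ?thesis using True by auto
    next
      case False then show ?thesis using cK unfolding K_def by auto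
    qed
    then show "c \<in> B" unfolding B_def by auto
  qed
  have "compact (B \<inter> K)" by (rule compact_Int_closed[OF cB clK])
  moreover have "B \<inter> K = K" using sub by auto
  ultimately show ?thesis unfolding K_def by simp
qed

lemma rayleigh_bdd:
  assumes A: "A > 0" and k: "k \<ge> 1" and u: "\<And>i. i < k \<Longrightarrow> C1_fun (u i)"
    and ind: "\<forall>c. integral (S_union A k) (\<lambda>x. (\<Sum>i<k. c i * u i x)\<^sup>2) = 0 \<longrightarrow> (\<forall>i<k. c i = 0)"
  shows "bdd_above {robin_rayleigh (S_union A k) (S_bint A k) \<alpha> (\<lambda>x. \<Sum>i<k. c i * u i x) | c. \<exists>i<k. c i \<noteq> 0}"
proof -
  define K where "K = {c::nat\<Rightarrow>real. (\<forall>i. k \<le> i \<longrightarrow> c i = 0) \<and> (\<Sum>i<k. (c i)\<^sup>2) = 1}"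
  define R where "R = (\<lambda>c. Nf A k \<alpha> u c / qf k u (S_union A k) c)"
  have Kne: "\<exists>i<k. c i \<noteq> 0" if cK: "c \<in> K" for c
  proof (rule ccontr)
    assume "\<not> (\<exists>i<k. c i \<noteq> 0)"
    then have "(\<Sum>i<k. (c i)\<^sup>2) = 0" by simp
    then show False using cK unfolding K_def by simp
  qed
  have cR: "continuous_on K R"
  proof -
    have Dnz: "\<forall>c\<in>K. qf k u (S_union A k) c \<noteq> 0"
    proof
      fix c assume "c \<in> K"
      from Dn_pos[OF A k u ind Kne[OF this]] show "qf k u (S_union A k) c \<noteq> 0" by simp
    qed
    show ?thesis unfolding R_def using Dnz
    by (intro continuous_intros continuous_on_subset[OF Nf_cont[OF A k u]] continuous_on_subset[OF Dn_cont[OF A k u]]) auto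
  qed
  have "compact (R ` K)" by (rule compact_continuous_image[OF cR compact_K[of k, folded K_def]])
  then have bK: "bdd_above (R ` K)" by (intro bounded_imp_bdd_above compact_imp_bounded)
  have sub: "{robin_rayleigh (S_union A k) (S_bint A k) \<alpha> (\<lambda>x. \<Sum>i<k. c i * u i x) | c. \<exists>i<k. c i \<noteq> 0} \<subseteq> R ` K"
  proof clarify
    fix c :: "nat \<Rightarrow> real" and i assume i: "i < k" "c i \<noteq> 0"
    define r where "r = sqrt (\<Sum>j<k. (c j)\<^sup>2)"
    have "(c i)\<^sup>2 \<le> (\<Sum>j<k. (c j)\<^sup>2)" using i by (intro member_le_sum) auto
    moreover have "(c i)\<^sup>2 > 0" using i by simp
    ultimately have sp: "(\<Sum>j<k. (c j)\<^sup>2) > 0" by linarith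
    then have r: "r > 0" "r\<^sup>2 = (\<Sum>j<k. (c j)\<^sup>2)" unfolding r_def by auto
    define c' where "c' = (\<lambda>j. if j < k then c j / r else 0)"
    have c'K: "c' \<in> K"
    proof -
      have "(\<Sum>j<k. (c' j)\<^sup>2) = (\<Sum>j<k. (c j)\<^sup>2 / r\<^sup>2)"
        unfolding c'_def by (intro sum.cong) (auto simp: power_divide)
      also have "\<dots> = 1" using r sp by (simp add: sum_divide_distrib[symmetric])
      finally show ?thesis unfolding K_def c'_def by auto
    qed
    have e: "\<And>j. j < k \<Longrightarrow> c' j = (1/r) * c j" unfolding c'_def by simp
    have "R c' = R c"
    proof -
      have "Nf A k \<alpha> u c' = Nf A k \<alpha> u (\<lambda>j. (1/r) * c j)" by (rule Nf_cong) (rule e)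
      also have "\<dots> = (1/r)\<^sup>2 * Nf A k \<alpha> u c" by (rule Nf_scale)
      finally have n: "Nf A k \<alpha> u c' = (1/r)\<^sup>2 * Nf A k \<alpha> u c" .
      have "qf k u (S_union A k) c' = qf k u (S_union A k) (\<lambda>j. (1/r) * c j)" by (rule qf_cong) (rule e)
      also have "\<dots> = (1/r)\<^sup>2 * qf k u (S_union A k) c" by (rule qf_scale)
      finally have d: "qf k u (S_union A k) c' = (1/r)\<^sup>2 * qf k u (S_union A k) c" .
      show ?thesis unfolding R_def n d using r by simp
    qed
    moreover have "robin_rayleigh (S_union A k) (S_bint A k) \<alpha> (\<lambda>x. \<Sum>i<k. c i * u i x) = R c"
      unfolding R_def by (rule rayleigh_rep[where A=A and k=k and u=u and c=c and \<alpha>=\<alpha>, OF A k u])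
    ultimately show "robin_rayleigh (S_union A k) (S_bint A k) \<alpha> (\<lambda>x. \<Sum>i<k. c i * u i x) \<in> R ` K"
      by (intro rev_image_eqI[OF c'K]) simp
  qed
  show ?thesis by (rule bdd_above_mono[OF bK sub])
qed

lemma dpos2: "((\<lambda>t::real. (max 0 t)\<^sup>2) has_real_derivative 2 * max 0 t) (at t)"
proof -
  consider "t = 0" | "t > 0" | "t < 0" by linarith
  then show ?thesis
  proof cases
    case 1
    have "(\<lambda>h::real. max 0 h) \<midarrow>0\<rightarrow> max 0 0" by (intro tendsto_intros)
    then have m1: "(\<lambda>h::real. max 0 h) \<midarrow>0\<rightarrow> 0" by simp
    have m2: "\<And>h::real. h \<noteq> 0 \<Longrightarrow> max 0 h = ((max 0 (0 + h))\<^sup>2 - (max 0 0)\<^sup>2) / h"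
      by (auto simp: max_def power2_eq_square)
    have "(\<lambda>h::real. ((max 0 (0 + h))\<^sup>2 - (max 0 0)\<^sup>2) / h) \<midarrow>0\<rightarrow> 0"
      using iffD1[OF LIM_cong[of 0 0 "\<lambda>h. max 0 h" "\<lambda>h. ((max 0 (0 + h))\<^sup>2 - (max 0 0)\<^sup>2) / h" 0 0, OF refl m2 refl] m1] .
    then show ?thesis using 1 by (simp add: DERIV_def)
  next
    case 2
    have "((\<lambda>t::real. t\<^sup>2) has_real_derivative 2 * t) (at t)"
      by (auto intro!: derivative_eq_intros)
    then have "((\<lambda>t::real. t\<^sup>2) has_real_derivative 2 * max 0 t) (at t)" using 2 by simp
    then show ?thesis
      by (rule has_field_derivative_transform_within_open[where S="{0<..}"]) (use 2 in auto)
  next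
    case 3
    have "((\<lambda>t::real. 0) has_real_derivative 0) (at t)" by simp
    then have "((\<lambda>t::real. 0) has_real_derivative 2 * max 0 t) (at t)" using 3 by simp
    then show ?thesis
      by (rule has_field_derivative_transform_within_open[where S="{..<0}"]) (use 3 in auto)
  qed
qed

definition sig :: "real \<Rightarrow> real" where
  "sig t = 2 * (max 0 t)\<^sup>2 - 4 * (max 0 (t - 1/2))\<^sup>2 + 2 * (max 0 (t - 1))\<^sup>2"
definition sig' :: "real \<Rightarrow> real" where
  "sig' t = 4 * max 0 t - 8 * max 0 (t - 1/2) + 4 * max 0 (t - 1)"

lemma dpos2_shift: "((\<lambda>t::real. (max 0 (t - c))\<^sup>2) has_real_derivative 2 * max 0 (t - c)) (at t)"
  using dpos2[of "t - c"] DERIV_shift[of "\<lambda>t. (max 0 t)\<^sup>2" "2 * max 0 (t - c)" t "-c"] by simp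

lemma sig_deriv: "(sig has_real_derivative sig' t) (at t)"
proof -
  have "((\<lambda>t. 2 * (max 0 t)\<^sup>2 - 4 * (max 0 (t - 1/2))\<^sup>2 + 2 * (max 0 (t - 1))\<^sup>2) has_real_derivative
        2 * (2 * max 0 t) - 4 * (2 * max 0 (t - 1/2)) + 2 * (2 * max 0 (t - 1))) (at t)"
    by (intro DERIV_add DERIV_diff DERIV_cmult dpos2 dpos2_shift)
  then show ?thesis unfolding sig_def[abs_def] sig'_def by simp
qed

lemma sig'_cont: "continuous_on UNIV sig'"
  unfolding sig'_def[abs_def] by (intro continuous_intros)

lemma sig_le0: "t \<le> 0 \<Longrightarrow> sig t = 0" and sig'_le0: "t \<le> 0 \<Longrightarrow> sig' t = 0"
  unfolding sig_def sig'_def by (auto simp: max_def)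

lemma sig_ge1: "t \<ge> 1 \<Longrightarrow> sig t = 1" and sig'_ge1: "t \<ge> 1 \<Longrightarrow> sig' t = 0"
  unfolding sig_def sig'_def by (auto simp: max_def power2_eq_square algebra_simps)

lemma C1_prod:
  fixes X Y X' Y' :: "real \<Rightarrow> real"
  assumes dX: "\<And>x. (X has_real_derivative X' x) (at x)" and dY: "\<And>y. (Y has_real_derivative Y' y) (at y)"
    and cX: "continuous_on UNIV X'" and cY: "continuous_on UNIV Y'"
  shows "C1_fun (\<lambda>p. X (fst p) * Y (snd p))"
    and "D1 (\<lambda>p. X (fst p) * Y (snd p)) = (\<lambda>p. X' (fst p) * Y (snd p))"
    and "D2 (\<lambda>p. X (fst p) * Y (snd p)) = (\<lambda>p. X (fst p) * Y' (snd p))"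
proof -
  have d: "((\<lambda>p. X (fst p) * Y (snd p)) has_derivative
           (\<lambda>h. X (fst p) * (snd h * Y' (snd p)) + fst h * X' (fst p) * Y (snd p))) (at p)" for p :: pt
  proof -
    have d1: "((\<lambda>p. X (fst p)) has_derivative (\<lambda>h. fst h * X' (fst p))) (at p)"
      by (rule DERIV_compose_FDERIV[OF dX]) (rule has_derivative_fst[OF has_derivative_ident])
    have d2: "((\<lambda>p. Y (snd p)) has_derivative (\<lambda>h. snd h * Y' (snd p))) (at p)"
      by (rule DERIV_compose_FDERIV[OF dY]) (rule has_derivative_snd[OF has_derivative_ident])
    show ?thesis using has_derivative_mult[OF d1 d2] by simp
  qed
  have fd: "frechet_derivative (\<lambda>p. X (fst p) * Y (snd p)) (at p) =
           (\<lambda>h. X (fst p) * (snd h * Y' (snd p)) + fst h * X' (fst p) * Y (snd p))" for p :: pt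
    using frechet_derivative_at[OF d] by simp
  show e1: "D1 (\<lambda>p. X (fst p) * Y (snd p)) = (\<lambda>p. X' (fst p) * Y (snd p))"
    unfolding D1_def[abs_def] fd by simp
  show e2: "D2 (\<lambda>p. X (fst p) * Y (snd p)) = (\<lambda>p. X (fst p) * Y' (snd p))"
    unfolding D2_def[abs_def] fd by simp
  have cXX: "continuous_on UNIV X" using dX by (meson DERIV_isCont continuous_at_imp_continuous_on)
  have cYY: "continuous_on UNIV Y" using dY by (meson DERIV_isCont continuous_at_imp_continuous_on)
  have c1: "continuous_on UNIV (D1 (\<lambda>p. X (fst p) * Y (snd p)))"
    unfolding e1 by (intro continuous_intros continuous_on_compose2[OF cX] continuous_on_compose2[OF cYY]) auto
  have c2: "continuous_on UNIV (D2 (\<lambda>p. X (fst p) * Y (snd p)))"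
    unfolding e2 by (intro continuous_intros continuous_on_compose2[OF cY] continuous_on_compose2[OF cXX]) auto
  show "C1_fun (\<lambda>p. X (fst p) * Y (snd p))"
    unfolding C1_fun_def
  proof (intro conjI)
    show "(\<lambda>p. X (fst p) * Y (snd p)) differentiable_on UNIV"
      unfolding differentiable_on_def differentiable_def using d by blast
    show "continuous_on UNIV (\<lambda>x. frechet_derivative (\<lambda>p. X (fst p) * Y (snd p)) (at x) (1, 0))"
      using c1 unfolding D1_def[abs_def] .
    show "continuous_on UNIV (\<lambda>x. frechet_derivative (\<lambda>p. X (fst p) * Y (snd p)) (at x) (0, 1))"
      using c2 unfolding D2_def[abs_def] .
  qed
qed

definition chi :: "real \<Rightarrow> nat \<Rightarrow> real \<Rightarrow> real" where
  "chi s j x = sig ((x - 2 * real j * s + 3 * s / 4) * 2 / s) * sig ((2 * real j * s + 7 * s / 4 - x) * 2 / s)"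
definition chi' :: "real \<Rightarrow> nat \<Rightarrow> real \<Rightarrow> real" where
  "chi' s j x = sig' ((x - 2 * real j * s + 3 * s / 4) * 2 / s) * (2 / s) * sig ((2 * real j * s + 7 * s / 4 - x) * 2 / s)
     + sig' ((2 * real j * s + 7 * s / 4 - x) * 2 / s) * (- 2 / s) * sig ((x - 2 * real j * s + 3 * s / 4) * 2 / s)"

lemma chi_deriv: "s \<noteq> 0 \<Longrightarrow> (chi s j has_real_derivative chi' s j x) (at x)"
proof -
  assume s: "s \<noteq> 0"
  have d1: "((\<lambda>x. sig ((x - 2 * real j * s + 3 * s / 4) * 2 / s)) has_real_derivative
             sig' ((x - 2 * real j * s + 3 * s / 4) * 2 / s) * (2 / s)) (at x)"
    by (rule DERIV_chain2[OF sig_deriv]) (use s in \<open>auto intro!: derivative_eq_intros\<close>)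
  have d2: "((\<lambda>x. sig ((2 * real j * s + 7 * s / 4 - x) * 2 / s)) has_real_derivative
             sig' ((2 * real j * s + 7 * s / 4 - x) * 2 / s) * (- 2 / s)) (at x)"
    by (rule DERIV_chain2[OF sig_deriv]) (use s in \<open>auto intro!: derivative_eq_intros\<close>)
  have e: "chi' s j x = sig' ((x - 2 * real j * s + 3 * s / 4) * 2 / s) * (2 / s) * sig ((2 * real j * s + 7 * s / 4 - x) * 2 / s)
     + sig' ((2 * real j * s + 7 * s / 4 - x) * 2 / s) * (- 2 / s) * sig ((x - 2 * real j * s + 3 * s / 4) * 2 / s)"
    unfolding chi'_def ..
  show ?thesis unfolding chi_def[abs_def] e by (rule DERIV_mult[OF d1 d2])
qed

lemma chi'_cont: "s \<noteq> 0 \<Longrightarrow> continuous_on UNIV (chi' s j)"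
proof -
  assume s: "s \<noteq> 0"
  have cs: "continuous_on UNIV sig" using sig_deriv by (meson DERIV_isCont continuous_at_imp_continuous_on)
  have l1: "continuous_on UNIV (\<lambda>x. (x - 2 * real j * s + 3 * s / 4) * 2 / s)"
    using s by (intro continuous_intros) auto
  have l2: "continuous_on UNIV (\<lambda>x. (2 * real j * s + 7 * s / 4 - x) * 2 / s)"
    using s by (intro continuous_intros) auto
  have c1: "continuous_on UNIV (\<lambda>x. sig' ((x - 2 * real j * s + 3 * s / 4) * 2 / s))"
    by (rule continuous_on_compose2[OF sig'_cont l1]) auto
  have c2: "continuous_on UNIV (\<lambda>x. sig' ((2 * real j * s + 7 * s / 4 - x) * 2 / s))"
    by (rule continuous_on_compose2[OF sig'_cont l2]) auto
  have c3: "continuous_on UNIV (\<lambda>x. sig ((x - 2 * real j * s + 3 * s / 4) * 2 / s))"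
    by (rule continuous_on_compose2[OF cs l1]) auto
  have c4: "continuous_on UNIV (\<lambda>x. sig ((2 * real j * s + 7 * s / 4 - x) * 2 / s))"
    by (rule continuous_on_compose2[OF cs l2]) auto
  show ?thesis unfolding chi'_def[abs_def]
    by (intro continuous_on_add continuous_on_mult c1 c2 c3 c4 continuous_on_const)
qed

lemma chi_on_cell:
  assumes s: "s > 0" and x: "2 * real i * s \<le> x" "x \<le> 2 * real i * s + s"
  shows "chi s j x = (if j = i then 1 else 0)" "chi' s j x = 0"
proof -
  let ?A1 = "(x - 2 * real j * s + 3 * s / 4) * 2 / s" and ?A2 = "(2 * real j * s + 7 * s / 4 - x) * 2 / s"
  consider "j = i" | "j < i" | "i < j" by linarith
  then have "chi s j x = (if j = i then 1 else 0) \<and> chi' s j x = 0"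
  proof cases
    case 1
    have "?A1 \<ge> 1" "?A2 \<ge> 1" using s x 1 by (simp_all add: field_simps)
    then show ?thesis using 1 unfolding chi_def chi'_def by (simp add: sig_ge1 sig'_ge1)
  next
    case 2
    have "real j + 1 \<le> real i" using 2 by simp
    then have "(real j + 1) * (2 * s) \<le> real i * (2 * s)" using s by (intro mult_right_mono) auto
    then have "?A2 \<le> 0" using s x by (simp add: field_simps)
    then show ?thesis using 2 unfolding chi_def chi'_def by (simp add: sig_le0 sig'_le0)
  next
    case 3
    have "real i + 1 \<le> real j" using 3 by simp
    then have "(real i + 1) * (2 * s) \<le> real j * (2 * s)" using s by (intro mult_right_mono) auto
    then have "?A1 \<le> 0" using s x by (simp add: field_simps)
    then show ?thesis using 3 unfolding chi_def chi'_def by (simp add: sig_le0 sig'_le0)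
  qed
  then show "chi s j x = (if j = i then 1 else 0)" "chi' s j x = 0" by auto
qed


definition tu :: "real \<Rightarrow> (real \<Rightarrow> real) \<Rightarrow> nat \<Rightarrow> pt \<Rightarrow> real" where
  "tu s f j = (\<lambda>p. (chi s j (fst p) * f (fst p - 2 * real j * s)) * f (snd p))"

lemma tu_C1:
  assumes s: "s \<noteq> 0" and df: "\<And>t. (f has_real_derivative f' t) (at t)" and cf': "continuous_on UNIV f'"
  shows "C1_fun (tu s f j)"
    and "D1 (tu s f j) = (\<lambda>p. (chi' s j (fst p) * f (fst p - 2 * real j * s) + f' (fst p - 2 * real j * s) * chi s j (fst p)) * f (snd p))"
    and "D2 (tu s f j) = (\<lambda>p. (chi s j (fst p) * f (fst p - 2 * real j * s)) * f' (snd p))"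
proof -
  define X where "X = (\<lambda>x. chi s j x * f (x - 2 * real j * s))"
  define X' where "X' = (\<lambda>x. chi' s j x * f (x - 2 * real j * s) + f' (x - 2 * real j * s) * chi s j x)"
  have dfs: "((\<lambda>x. f (x - 2 * real j * s)) has_real_derivative f' (x - 2 * real j * s)) (at x)" for x
    using DERIV_shift[of f "f' (x - 2 * real j * s)" x "- (2 * real j * s)"] df by simp
  have dX: "(X has_real_derivative X' x) (at x)" for x
    unfolding X_def X'_def by (rule DERIV_mult[OF chi_deriv[OF s] dfs])
  have cf: "continuous_on UNIV f" using df by (meson DERIV_isCont continuous_at_imp_continuous_on)
  have cchi: "continuous_on UNIV (chi s j)" using chi_deriv[OF s] by (meson DERIV_isCont continuous_at_imp_continuous_on)
  have csh: "continuous_on UNIV (\<lambda>x::real. x - 2 * real j * s)" by (intro continuous_intros)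
  have cX': "continuous_on UNIV X'" unfolding X'_def
    by (intro continuous_on_add continuous_on_mult chi'_cont[OF s] cchi
        continuous_on_compose2[OF cf csh] continuous_on_compose2[OF cf' csh]) auto
  have e: "tu s f j = (\<lambda>p. X (fst p) * f (snd p))" unfolding tu_def X_def ..
  show "C1_fun (tu s f j)" unfolding e by (rule C1_prod(1)[OF dX df cX' cf'])
  show "D1 (tu s f j) = (\<lambda>p. (chi' s j (fst p) * f (fst p - 2 * real j * s) + f' (fst p - 2 * real j * s) * chi s j (fst p)) * f (snd p))"
    unfolding e C1_prod(2)[OF dX df cX' cf'] unfolding X'_def ..
  show "D2 (tu s f j) = (\<lambda>p. (chi s j (fst p) * f (fst p - 2 * real j * s)) * f' (snd p))"
    unfolding e C1_prod(3)[OF dX df cX' cf'] unfolding X_def ..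
qed

lemma sum_delta_mult: "i < (k::nat) \<Longrightarrow> (\<Sum>j<k. c j * (if j = i then X else 0)) = c i * (X::real)"
proof -
  assume i: "i < k"
  have "(\<Sum>j<k. c j * (if j = i then X else 0)) = (\<Sum>j<k. if j = i then c j * X else 0)"
    by (intro sum.cong) auto
  also have "\<dots> = c i * X" using i by (subst sum.delta) auto
  finally show ?thesis .
qed

lemma tu_on_cell:
  assumes s: "s > 0" and df: "\<And>t. (f has_real_derivative f' t) (at t)" and cf': "continuous_on UNIV f'"
    and i: "i < k" and x: "2 * real i * s \<le> x" "x \<le> 2 * real i * s + s"
  shows "(\<Sum>j<k. c j * tu s f j (x, y)) = c i * (f (x - 2 * real i * s) * f y)"
    and "(\<Sum>j<k. c j * D1 (tu s f j) (x, y)) = c i * (f' (x - 2 * real i * s) * f y)"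
    and "(\<Sum>j<k. c j * D2 (tu s f j) (x, y)) = c i * (f (x - 2 * real i * s) * f' y)"
proof -
  have s0: "s \<noteq> 0" using s by simp
  have c: "chi s j x = (if j = i then 1 else 0)" "chi' s j x = 0" for j
    using chi_on_cell[OF s x] by auto
  have "tu s f j (x, y) = (if j = i then f (x - 2 * real i * s) * f y else 0)" for j
    unfolding tu_def using c by auto
  then show "(\<Sum>j<k. c j * tu s f j (x, y)) = c i * (f (x - 2 * real i * s) * f y)"
    using sum_delta_mult[OF i] by simp
  have "D1 (tu s f j) (x, y) = (if j = i then f' (x - 2 * real i * s) * f y else 0)" for j
    unfolding tu_C1(2)[OF s0 df cf'] using c by auto
  then show "(\<Sum>j<k. c j * D1 (tu s f j) (x, y)) = c i * (f' (x - 2 * real i * s) * f y)"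
    using sum_delta_mult[OF i] by simp
  have "D2 (tu s f j) (x, y) = (if j = i then f (x - 2 * real i * s) * f' y else 0)" for j
    unfolding tu_C1(3)[OF s0 df cf'] using c by auto
  then show "(\<Sum>j<k. c j * D2 (tu s f j) (x, y)) = c i * (f (x - 2 * real i * s) * f' y)"
    using sum_delta_mult[OF i] by simp
qed

lemma integral_prod_sep:
  fixes g h :: "real \<Rightarrow> real"
  assumes "continuous_on UNIV g" "continuous_on UNIV h"
  shows "integral (cbox (0,0) (s,s)) (\<lambda>p. g (fst p) * h (snd p)) = integral {0..s} g * integral {0..s} h"
proof -
  have c: "continuous_on UNIV (\<lambda>p::pt. g (fst p) * h (snd p))"
    by (intro continuous_intros continuous_on_compose2[OF assms(1)] continuous_on_compose2[OF assms(2)]) auto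
  have "integral (cbox (0,0) (s,s)) (\<lambda>p. g (fst p) * h (snd p)) = integral {0..s} (\<lambda>x. integral {0..s} (\<lambda>y. g x * h y))"
    using fub1[OF c] by simp
  also have "\<dots> = integral {0..s} (\<lambda>x. g x * integral {0..s} h)" by simp
  also have "\<dots> = integral {0..s} g * integral {0..s} h" by simp
  finally show ?thesis .
qed

lemma test_facts:
  assumes A: "A > 0" and k: "k \<ge> 1"
    and df: "\<And>t. (f has_real_derivative f' t) (at t)" and cf': "continuous_on UNIV f'"
  defines "s \<equiv> sq_side A k"
  shows "integral (S_union A k) (\<lambda>x. (\<Sum>j<k. c j * tu s f j x)\<^sup>2)
           = (\<Sum>i<k. (c i)\<^sup>2) * (integral {0..s} (\<lambda>t. (f t)\<^sup>2))\<^sup>2"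
    and "dirichlet (S_union A k) (\<lambda>x. \<Sum>j<k. c j * tu s f j x) + \<alpha> * S_bint A k (\<lambda>x. (\<Sum>j<k. c j * tu s f j x)\<^sup>2)
           = (\<Sum>i<k. (c i)\<^sup>2) * (2 * integral {0..s} (\<lambda>t. (f t)\<^sup>2) *
               (integral {0..s} (\<lambda>t. (f' t)\<^sup>2) + \<alpha> * ((f 0)\<^sup>2 + (f s)\<^sup>2)))"
proof -
  have s: "s > 0" unfolding s_def using side_pos[OF A k] .
  have s0: "s \<noteq> 0" using s by simp
  have Su: "S_union A k = (\<Union>i<k. sq_cell s i)" unfolding S_union_def s_def ..
  let ?v = "\<lambda>x. \<Sum>j<k. c j * tu s f j x"
  define I0 where "I0 = integral {0..s} (\<lambda>t. (f t)\<^sup>2)"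
  define I1 where "I1 = integral {0..s} (\<lambda>t. (f' t)\<^sup>2)"
  have cf: "continuous_on UNIV f" using df by (meson DERIV_isCont continuous_at_imp_continuous_on)
  have cf2: "continuous_on UNIV (\<lambda>t. (f t)\<^sup>2)" "continuous_on UNIV (\<lambda>t. (f' t)\<^sup>2)"
    using cf cf' by (auto intro!: continuous_intros)
  have C1v: "C1_fun ?v" by (rule C1_sum(1)) (rule tu_C1(1)[OF s0 df cf'])
  have cv: "continuous_on UNIV ?v" "continuous_on UNIV (D1 ?v)" "continuous_on UNIV (D2 ?v)"
    using C1_cont[OF C1v] by auto
  have D1v: "D1 ?v = (\<lambda>p. \<Sum>j<k. c j * D1 (tu s f j) p)" by (rule C1_sum(2)) (rule tu_C1(1)[OF s0 df cf'])
  have D2v: "D2 ?v = (\<lambda>p. \<Sum>j<k. c j * D2 (tu s f j) p)" by (rule C1_sum(3)) (rule tu_C1(1)[OF s0 df cf'])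
  have pt1: "p + (a, 0) = (fst p + a, snd p)" for p :: pt and a by (cases p) simp
  have pt2: "0 \<le> fst p \<and> fst p \<le> s" if "p \<in> cbox (0,0) (s,s)" for p :: pt
    using that by (cases p) (simp add: cbox_interval)
  note pt = pt1 pt2
  have onc: "?v (x0 + 2 * real i * s, y) = c i * (f x0 * f y)"
            "D1 ?v (x0 + 2 * real i * s, y) = c i * (f' x0 * f y)"
            "D2 ?v (x0 + 2 * real i * s, y) = c i * (f x0 * f' y)"
    if "i < k" "0 \<le> x0" "x0 \<le> s" for i x0 y
    using tu_on_cell[OF s df cf' that(1), of "x0 + 2 * real i * s" c y] that unfolding D1v D2v by auto
  have cv2: "continuous_on UNIV (\<lambda>x. (?v x)\<^sup>2)" using cv by (auto intro!: continuous_intros)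
  have "integral (S_union A k) (\<lambda>x. (?v x)\<^sup>2) = (\<Sum>i<k. integral (sq_cell s i) (\<lambda>x. (?v x)\<^sup>2))"
    unfolding Su by (rule union_integral[OF cv2 s])
  also have "\<dots> = (\<Sum>i<k. (c i)\<^sup>2 * I0\<^sup>2)"
  proof (rule sum.cong[OF refl])
    fix i assume i: "i \<in> {..<k}"
    have "integral (sq_cell s i) (\<lambda>x. (?v x)\<^sup>2) = integral (cbox (0,0) (s,s)) (\<lambda>p. (c i)\<^sup>2 * ((\<lambda>t. (f t)\<^sup>2) (fst p) * (\<lambda>t. (f t)\<^sup>2) (snd p)))"
      unfolding cell_integral
      by (rule integral_cong) (use i pt onc in \<open>auto simp: power_mult_distrib\<close>)
    also have "\<dots> = (c i)\<^sup>2 * I0\<^sup>2"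
      unfolding integral_mult_right integral_prod_sep[OF cf2(1) cf2(1)] I0_def by (simp add: power2_eq_square)
    finally show "integral (sq_cell s i) (\<lambda>x. (?v x)\<^sup>2) = (c i)\<^sup>2 * I0\<^sup>2" .
  qed
  finally show "integral (S_union A k) (\<lambda>x. (?v x)\<^sup>2) = (\<Sum>i<k. (c i)\<^sup>2) * (integral {0..s} (\<lambda>t. (f t)\<^sup>2))\<^sup>2"
    unfolding I0_def sum_distrib_right .
  have cd: "continuous_on UNIV (\<lambda>p. (D1 ?v p)\<^sup>2 + (D2 ?v p)\<^sup>2)" using cv by (auto intro!: continuous_intros)
  have "dirichlet (S_union A k) ?v = integral (S_union A k) (\<lambda>p. (D1 ?v p)\<^sup>2 + (D2 ?v p)\<^sup>2)"
    unfolding dirichlet_def D1_def D2_def ..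
  also have "\<dots> = (\<Sum>i<k. integral (sq_cell s i) (\<lambda>p. (D1 ?v p)\<^sup>2 + (D2 ?v p)\<^sup>2))"
    unfolding Su by (rule union_integral[OF cd s])
  also have "\<dots> = (\<Sum>i<k. (c i)\<^sup>2 * (2 * I1 * I0))"
  proof (rule sum.cong[OF refl])
    fix i assume i: "i \<in> {..<k}"
    have "integral (sq_cell s i) (\<lambda>p. (D1 ?v p)\<^sup>2 + (D2 ?v p)\<^sup>2) = integral (cbox (0,0) (s,s))
        (\<lambda>p. (c i)\<^sup>2 * ((\<lambda>t. (f' t)\<^sup>2) (fst p) * (\<lambda>t. (f t)\<^sup>2) (snd p)) + (c i)\<^sup>2 * ((\<lambda>t. (f t)\<^sup>2) (fst p) * (\<lambda>t. (f' t)\<^sup>2) (snd p)))"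
      unfolding cell_integral
      by (rule integral_cong) (use i pt onc in \<open>auto simp: power_mult_distrib\<close>)
    also have "\<dots> = (c i)\<^sup>2 * (2 * I1 * I0)"
    proof -
      have c1: "continuous_on UNIV (\<lambda>p::pt. (c i)\<^sup>2 * ((\<lambda>t. (f' t)\<^sup>2) (fst p) * (\<lambda>t. (f t)\<^sup>2) (snd p)))"
        using cf2 by (intro continuous_intros continuous_on_compose2[OF cf2(1)] continuous_on_compose2[OF cf2(2)]) auto
      have c2: "continuous_on UNIV (\<lambda>p::pt. (c i)\<^sup>2 * ((\<lambda>t. (f t)\<^sup>2) (fst p) * (\<lambda>t. (f' t)\<^sup>2) (snd p)))"
        using cf2 by (intro continuous_intros continuous_on_compose2[OF cf2(1)] continuous_on_compose2[OF cf2(2)]) auto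
      show ?thesis
        by (subst integral_add[OF integrable_continuous[OF continuous_on_subset[OF c1 subset_UNIV]]
                                  integrable_continuous[OF continuous_on_subset[OF c2 subset_UNIV]]])
           (simp only: integral_mult_right integral_prod_sep[OF cf2(2) cf2(1)] integral_prod_sep[OF cf2(1) cf2(2)] I0_def I1_def,
            simp add: algebra_simps)
    qed
    finally show "integral (sq_cell s i) (\<lambda>p. (D1 ?v p)\<^sup>2 + (D2 ?v p)\<^sup>2) = (c i)\<^sup>2 * (2 * I1 * I0)" .
  qed
  finally have dir: "dirichlet (S_union A k) ?v = (\<Sum>i<k. (c i)\<^sup>2 * (2 * I1 * I0))" .
  have bint: "S_bint A k (\<lambda>x. (?v x)\<^sup>2) = (\<Sum>i<k. (c i)\<^sup>2 * (2 * ((f 0)\<^sup>2 + (f s)\<^sup>2) * I0))"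
    unfolding S_bint_def Let_def s_def[symmetric]
  proof (rule sum.cong[OF refl])
    fix i assume i: "i \<in> {..<k}"
    let ?a = "2 * real i * s"
    have "integral {0..s} (\<lambda>t. (?v (?a + t, 0))\<^sup>2 + (?v (?a + t, s))\<^sup>2 + (?v (?a, t))\<^sup>2 + (?v (?a + s, t))\<^sup>2)
        = integral {0..s} (\<lambda>t. ((c i)\<^sup>2 * (2 * ((f 0)\<^sup>2 + (f s)\<^sup>2))) * (f t)\<^sup>2)"
    proof (rule integral_cong)
      fix t assume t: "t \<in> {0..s}"
      have e1: "?v (?a + t, y) = c i * (f t * f y)" for y using onc(1)[of i t y] i t by (simp add: add.commute)
      have e2: "?v (?a, y) = c i * (f 0 * f y)" for y using onc(1)[of i 0 y] i s by simp
      have e3: "?v (?a + s, y) = c i * (f s * f y)" for y using onc(1)[of i s y] i s by (simp add: add.commute)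
      show "(?v (?a + t, 0))\<^sup>2 + (?v (?a + t, s))\<^sup>2 + (?v (?a, t))\<^sup>2 + (?v (?a + s, t))\<^sup>2
            = ((c i)\<^sup>2 * (2 * ((f 0)\<^sup>2 + (f s)\<^sup>2))) * (f t)\<^sup>2"
        unfolding e1 e2 e3 by (simp add: power_mult_distrib algebra_simps)
    qed
    also have "\<dots> = (c i)\<^sup>2 * (2 * ((f 0)\<^sup>2 + (f s)\<^sup>2) * I0)" unfolding I0_def by simp
    finally show "integral {0..s} (\<lambda>t. (?v (?a + t, 0))\<^sup>2 + (?v (?a + t, s))\<^sup>2 + (?v (?a, t))\<^sup>2 + (?v (?a + s, t))\<^sup>2)
        = (c i)\<^sup>2 * (2 * ((f 0)\<^sup>2 + (f s)\<^sup>2) * I0)" .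
  qed
  show "dirichlet (S_union A k) ?v + \<alpha> * S_bint A k (\<lambda>x. (?v x)\<^sup>2)
           = (\<Sum>i<k. (c i)\<^sup>2) * (2 * integral {0..s} (\<lambda>t. (f t)\<^sup>2) *
               (integral {0..s} (\<lambda>t. (f' t)\<^sup>2) + \<alpha> * ((f 0)\<^sup>2 + (f s)\<^sup>2)))"
    unfolding dir bint I0_def[symmetric] I1_def[symmetric]
    by (simp add: sum_distrib_left sum_distrib_right sum.distrib[symmetric] algebra_simps)
qed

lemma trig_I0:
  fixes s a b :: real
  assumes s: "s > 0"
  shows "integral {0..s} (\<lambda>t. (a + b * sin (pi * t / s))\<^sup>2) = s * (a\<^sup>2 + 4 * a * b / pi + b\<^sup>2 / 2)"
proof -
  define F where "F = (\<lambda>t. a\<^sup>2 * t - 2 * a * b * (s / pi) * cos (pi * t / s) + b\<^sup>2 * (t / 2 - s / (4 * pi) * sin (2 * (pi * t / s))))"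
  have d: "(F has_real_derivative (a + b * sin (pi * t / s))\<^sup>2) (at t)" for t
  proof -
    have "(F has_real_derivative a\<^sup>2 * 1 - 2 * a * b * (s / pi) * (- sin (pi * t / s) * (pi / s))
          + b\<^sup>2 * (1 / 2 - s / (4 * pi) * (cos (2 * (pi * t / s)) * (2 * (pi / s))))) (at t)"
      unfolding F_def using s by (auto intro!: derivative_eq_intros)
    moreover have "a\<^sup>2 * 1 - 2 * a * b * (s / pi) * (- sin (pi * t / s) * (pi / s))
          + b\<^sup>2 * (1 / 2 - s / (4 * pi) * (cos (2 * (pi * t / s)) * (2 * (pi / s)))) = (a + b * sin (pi * t / s))\<^sup>2"
      using s unfolding cos_double_sin by (simp add: field_simps power2_eq_square)
    ultimately show ?thesis by simp
  qed
  have "((\<lambda>t. (a + b * sin (pi * t / s))\<^sup>2) has_integral F s - F 0) {0..s}"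
    using s d by (intro fundamental_theorem_of_calculus)
       (auto simp: has_real_derivative_iff_has_vector_derivative[symmetric] intro: has_field_derivative_at_within)
  moreover have "F s - F 0 = s * (a\<^sup>2 + 4 * a * b / pi + b\<^sup>2 / 2)"
    unfolding F_def using s by (simp add: field_simps)
  ultimately show ?thesis by (simp add: integral_unique)
qed

lemma trig_I1:
  fixes s b :: real
  assumes s: "s > 0"
  shows "integral {0..s} (\<lambda>t. (b * (pi / s) * cos (pi * t / s))\<^sup>2) = b\<^sup>2 * pi\<^sup>2 / (2 * s)"
proof -
  define F where "F = (\<lambda>t. b\<^sup>2 * (pi / s)\<^sup>2 * (t / 2 + s / (4 * pi) * sin (2 * (pi * t / s))))"
  have d: "(F has_real_derivative (b * (pi / s) * cos (pi * t / s))\<^sup>2) (at t)" for t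
  proof -
    have "(F has_real_derivative b\<^sup>2 * (pi / s)\<^sup>2 * (1 / 2 + s / (4 * pi) * (cos (2 * (pi * t / s)) * (2 * (pi / s))))) (at t)"
      unfolding F_def using s by (auto intro!: derivative_eq_intros)
    moreover have "b\<^sup>2 * (pi / s)\<^sup>2 * (1 / 2 + s / (4 * pi) * (cos (2 * (pi * t / s)) * (2 * (pi / s)))) = (b * (pi / s) * cos (pi * t / s))\<^sup>2"
      using s unfolding cos_double_cos by (simp add: field_simps power2_eq_square)
    ultimately show ?thesis by simp
  qed
  have "((\<lambda>t. (b * (pi / s) * cos (pi * t / s))\<^sup>2) has_integral F s - F 0) {0..s}"
    using s d by (intro fundamental_theorem_of_calculus)
       (auto simp: has_real_derivative_iff_has_vector_derivative[symmetric] intro: has_field_derivative_at_within)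
  moreover have "F s - F 0 = b\<^sup>2 * pi\<^sup>2 / (2 * s)"
    unfolding F_def using s by (simp add: field_simps power2_eq_square)
  ultimately show ?thesis by (simp add: integral_unique)
qed

lemma mu_alg:
  fixes s \<alpha> :: real
  assumes s: "s > 0" and a: "\<alpha> > 0"
  defines "Z \<equiv> (pi\<^sup>2 - 2 * \<alpha> * s)\<^sup>2 + 64 * \<alpha> * s"
  defines "\<mu> \<equiv> pi\<^sup>2 * (pi\<^sup>2 + 2 * \<alpha> * s - sqrt Z) / (2 * (pi\<^sup>2 - 8) * s\<^sup>2)"
  defines "a0 \<equiv> 2 * \<mu> * s / pi" and "b0 \<equiv> 2 * \<alpha> - \<mu> * s"
  shows "\<mu> > 0"
    and "b0\<^sup>2 * pi\<^sup>2 / (2 * s) + \<alpha> * (2 * a0\<^sup>2) = \<mu> * (s * (a0\<^sup>2 + 4 * a0 * b0 / pi + b0\<^sup>2 / 2))"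
    and "s * (a0\<^sup>2 + 4 * a0 * b0 / pi + b0\<^sup>2 / 2) > 0"
proof -
  define P where "P = pi\<^sup>2"
  have P8: "P > 8" unfolding P_def using pi_sq_gt8 .
  have Z0: "Z \<ge> 0" using a s by (simp add: Z_def)
  define R where "R = sqrt Z"
  have R2: "R\<^sup>2 = Z" unfolding R_def using Z0 by simp
  have R0: "R \<ge> 0" unfolding R_def using Z0 by simp
  have "(P + 2 * \<alpha> * s)\<^sup>2 - Z = 8 * \<alpha> * s * (P - 8)" unfolding Z_def P_def by (simp add: power2_eq_square algebra_simps)
  also have "\<dots> > 0" using a s P8 by simp
  finally have "R\<^sup>2 < (P + 2 * \<alpha> * s)\<^sup>2" using R2 by simp
  moreover have "0 \<le> P + 2 * \<alpha> * s" using a s P8 by simp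
  ultimately have RP: "R < P + 2 * \<alpha> * s" by (rule power_less_imp_less_base)
  have mu: "\<mu> = P * (P + 2 * \<alpha> * s - R) / (2 * (P - 8) * s\<^sup>2)" unfolding \<mu>_def P_def R_def ..
  show mpos: "\<mu> > 0" unfolding mu using RP P8 s by (intro divide_pos_pos mult_pos_pos) auto
  have root: "s\<^sup>2 * (P - 8) / (2 * P) * \<mu>\<^sup>2 - (\<alpha> * s + P / 2) * \<mu> + \<alpha> * P / s = 0"
  proof -
    have "2 * (P - 8) * s\<^sup>2 \<noteq> 0" using P8 s by simp
    have e: "(2 * (P - 8) * s\<^sup>2) * \<mu> = P * (P + 2 * \<alpha> * s - R)" unfolding mu using P8 s by simp
    have "(2 * (P - 8) * s\<^sup>2) * (2 * P * s) * (s\<^sup>2 * (P - 8) / (2 * P) * \<mu>\<^sup>2 - (\<alpha> * s + P / 2) * \<mu> + \<alpha> * P / s)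
        = s * ((2 * (P - 8) * s\<^sup>2) * \<mu>)\<^sup>2 / 2 - (2 * \<alpha> * s + P) * P * s * ((2 * (P - 8) * s\<^sup>2) * \<mu>) + 4 * \<alpha> * P\<^sup>2 * (P - 8) * s\<^sup>2"
      using P8 s by (simp add: field_simps power2_eq_square)
    also have "\<dots> = s * (P * (P + 2 * \<alpha> * s - R))\<^sup>2 / 2 - (2 * \<alpha> * s + P) * P * s * (P * (P + 2 * \<alpha> * s - R)) + 4 * \<alpha> * P\<^sup>2 * (P - 8) * s\<^sup>2"
      unfolding e ..
    also have "\<dots> = s * P\<^sup>2 / 2 * (R\<^sup>2 - ((P - 2 * \<alpha> * s)\<^sup>2 + 64 * \<alpha> * s))"
      by (simp add: power2_eq_square field_simps)
    also have "\<dots> = 0" using R2 unfolding Z_def P_def by simp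
    finally show ?thesis using P8 s by simp
  qed
  have pi0: "pi \<noteq> 0" by simp
  have P2: "pi * pi = P" unfolding P_def by (simp add: power2_eq_square)
  have "b0\<^sup>2 * pi\<^sup>2 / (2 * s) + \<alpha> * (2 * a0\<^sup>2) - \<mu> * (s * (a0\<^sup>2 + 4 * a0 * b0 / pi + b0\<^sup>2 / 2))
      = b0 * (\<alpha> * P / s - \<mu> * (\<alpha> * s + P / 2) + \<mu>\<^sup>2 * (s\<^sup>2 * (P - 8) / (2 * P)))"
    unfolding a0_def b0_def P_def using s pi0 by (simp add: field_simps power2_eq_square)
  also have "\<dots> = 0" using root by (simp add: algebra_simps)
  finally show "b0\<^sup>2 * pi\<^sup>2 / (2 * s) + \<alpha> * (2 * a0\<^sup>2) = \<mu> * (s * (a0\<^sup>2 + 4 * a0 * b0 / pi + b0\<^sup>2 / 2))" by simp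
  have a0p: "a0 > 0" unfolding a0_def using mpos s by simp
  have q: "a0\<^sup>2 + 4 * a0 * b0 / pi + b0\<^sup>2 / 2 = (a0 + 2 * b0 / pi)\<^sup>2 + b0\<^sup>2 * ((P - 8) / (2 * P))"
    unfolding P_def using pi0 by (simp add: field_simps power2_eq_square)
  have "(a0 + 2 * b0 / pi)\<^sup>2 + b0\<^sup>2 * ((P - 8) / (2 * P)) > 0"
  proof (cases "b0 = 0")
    case True then show ?thesis using a0p by simp
  next
    case False
    have "b0\<^sup>2 * ((P - 8) / (2 * P)) > 0" using False P8 by (intro mult_pos_pos divide_pos_pos) auto
    then show ?thesis by (smt (verit) zero_le_power2)
  qed
  then show "s * (a0\<^sup>2 + 4 * a0 * b0 / pi + b0\<^sup>2 / 2) > 0" unfolding q using s by simp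
qed

lemma L_conv:
  assumes A: "A > 0" and k: "k \<ge> 1"
  shows "4 * \<alpha> * pi\<^sup>2 * real k / (sqrt A * (pi\<^sup>2 * sqrt (real k) + 2 * \<alpha> * sqrt A))
         = 2 * (2*\<alpha>*pi\<^sup>2 / (sq_side A k * (pi\<^sup>2 + 2*\<alpha> * sq_side A k)))"
proof -
  define rk where "rk = sqrt (real k)"
  define rA where "rA = sqrt A"
  have rk: "rk > 0" "rk\<^sup>2 = real k" using k unfolding rk_def by auto
  have rke: "sqrt (real k) = rk" unfolding rk_def ..
  have rA: "rA > 0" using A unfolding rA_def by auto
  have s: "sq_side A k = rA / rk" unfolding sq_side_def rk_def rA_def by (simp add: real_sqrt_divide)
  show ?thesis unfolding s rk_def[symmetric] rA_def[symmetric] rk(2)[symmetric]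
    using rk rA rke by (simp add: field_simps power2_eq_square)
qed

lemma U_conv:
  fixes \<alpha> :: real
  assumes A: "A > 0" and k: "k \<ge> 1"
  defines "s \<equiv> sq_side A k"
  defines "Z \<equiv> (pi\<^sup>2 - 2 * \<alpha> * s)\<^sup>2 + 64 * \<alpha> * s"
  shows "pi\<^sup>2 * sqrt (real k) / ((pi\<^sup>2 - 8) * A) *
             (pi\<^sup>2 * sqrt (real k) + 2 * \<alpha> * sqrt A
              - sqrt (64 * \<alpha> * sqrt (real k) * sqrt A + (pi\<^sup>2 * sqrt (real k) - 2 * \<alpha> * sqrt A)\<^sup>2))
         = 2 * (pi\<^sup>2 * (pi\<^sup>2 + 2 * \<alpha> * s - sqrt Z) / (2 * (pi\<^sup>2 - 8) * s\<^sup>2))"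
proof -
  define rk where "rk = sqrt (real k)"
  define rA where "rA = sqrt A"
  have rk: "rk > 0" "rk\<^sup>2 = real k" using k unfolding rk_def by auto
  have rke: "sqrt (real k) = rk" unfolding rk_def ..
  have rA: "rA > 0" "rA\<^sup>2 = A" using A unfolding rA_def by auto
  have s': "s = rA / rk" unfolding s_def sq_side_def rk_def rA_def by (simp add: real_sqrt_divide)
  have e1: "sqrt A = rk * s" unfolding s' rA_def using rk by simp
  have e2: "A = rk\<^sup>2 * s\<^sup>2" using e1 A by (metis power_mult_distrib real_sqrt_pow2 less_imp_le)
  have inner: "64 * \<alpha> * rk * (rk * s) + (pi\<^sup>2 * rk - 2 * \<alpha> * (rk * s))\<^sup>2 = rk\<^sup>2 * Z"
    unfolding Z_def by (simp add: power2_eq_square algebra_simps)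
  have sq: "sqrt (64 * \<alpha> * rk * (rk * s) + (pi\<^sup>2 * rk - 2 * \<alpha> * (rk * s))\<^sup>2) = rk * sqrt Z"
    unfolding inner real_sqrt_mult using rk rke by (simp del: real_sqrt_mult)
  have P8: "pi\<^sup>2 - 8 > 0" using pi_sq_gt8 by simp
  have s0: "s > 0" unfolding s' using rk rA by simp
  have "pi\<^sup>2 * sqrt (real k) / ((pi\<^sup>2 - 8) * A) *
             (pi\<^sup>2 * sqrt (real k) + 2 * \<alpha> * sqrt A
              - sqrt (64 * \<alpha> * sqrt (real k) * sqrt A + (pi\<^sup>2 * sqrt (real k) - 2 * \<alpha> * sqrt A)\<^sup>2))
       = pi\<^sup>2 * rk / ((pi\<^sup>2 - 8) * A) * (pi\<^sup>2 * rk + 2 * \<alpha> * (rk * s)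
              - sqrt (64 * \<alpha> * rk * (rk * s) + (pi\<^sup>2 * rk - 2 * \<alpha> * (rk * s))\<^sup>2))"
    unfolding e1 rke ..
  also have "\<dots> = pi\<^sup>2 * rk / ((pi\<^sup>2 - 8) * (rk\<^sup>2 * s\<^sup>2)) * (pi\<^sup>2 * rk + 2 * \<alpha> * (rk * s) - rk * sqrt Z)"
    unfolding sq by (subst e2) (rule refl)
  also have "\<dots> = 2 * (pi\<^sup>2 * (pi\<^sup>2 + 2 * \<alpha> * s - sqrt Z) / (2 * (pi\<^sup>2 - 8) * s\<^sup>2))"
    using rk(1) s0 P8 by (simp add: field_simps power2_eq_square)
  finally show ?thesis .
qed

theorem propositionA3:
  fixes A \<alpha> :: real and k :: nat
  assumes "A > 0" and "\<alpha> > 0" and "k \<ge> 1"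
  shows "4 * \<alpha> * pi\<^sup>2 * real k / (sqrt A * (pi\<^sup>2 * sqrt (real k) + 2 * \<alpha> * sqrt A))
           \<le> robin_eig_S A k \<alpha> k \<and>
         robin_eig_S A k \<alpha> k
           \<le> pi\<^sup>2 * sqrt (real k) / ((pi\<^sup>2 - 8) * A) *
             (pi\<^sup>2 * sqrt (real k) + 2 * \<alpha> * sqrt A
              - sqrt (64 * \<alpha> * sqrt (real k) * sqrt A + (pi\<^sup>2 * sqrt (real k) - 2 * \<alpha> * sqrt A)\<^sup>2))"
proof -
  note A = assms(1) and a = assms(2) and k = assms(3)
  define s where "s = sq_side A k"
  have s: "s > 0" unfolding s_def using side_pos[OF A k] .
  define m2 where "m2 = 2 * (2*\<alpha>*pi\<^sup>2 / (sq_side A k * (pi\<^sup>2 + 2*\<alpha> * sq_side A k)))"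
  define Rs where "Rs = (\<lambda>u. {robin_rayleigh (S_union A k) (S_bint A k) \<alpha> (\<lambda>x. \<Sum>i<k. c i * u i x) | c. \<exists>i<k. c i \<noteq> 0})"
  define Adm where "Adm = (\<lambda>u. (\<forall>i<k. C1_fun (u i)) \<and>
              (\<forall>c. integral (S_union A k) (\<lambda>x. (\<Sum>i<k. c i * u i x)\<^sup>2) = 0 \<longrightarrow> (\<forall>i<k. c i = 0)))"
  define E where "E = {Sup (Rs u) | u. Adm u}"
  have eig: "robin_eig_S A k \<alpha> k = Inf E"
    unfolding robin_eig_S_def robin_eig_def E_def Rs_def Adm_def ..
  have LBu: "m2 \<le> Sup (Rs u)" if "Adm u" for u
  proof -
    have u: "\<And>i. i < k \<Longrightarrow> C1_fun (u i)" using that unfolding Adm_def by blast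
    have ind: "\<forall>c. integral (S_union A k) (\<lambda>x. (\<Sum>i<k. c i * u i x)\<^sup>2) = 0 \<longrightarrow> (\<forall>i<k. c i = 0)"
      using that unfolding Adm_def by blast
    define c0 where "c0 = (\<lambda>i::nat. if i = 0 then (1::real) else 0)"
    have c0: "\<exists>i<k. c0 i \<noteq> 0" using k unfolding c0_def by (intro exI[of _ 0]) auto
    have mem: "robin_rayleigh (S_union A k) (S_bint A k) \<alpha> (\<lambda>x. \<Sum>i<k. c0 i * u i x) \<in> Rs u"
      unfolding Rs_def using c0 by blast
    have l: "m2 \<le> robin_rayleigh (S_union A k) (S_bint A k) \<alpha> (\<lambda>x. \<Sum>i<k. c0 i * u i x)"
      unfolding m2_def by (rule rayleigh_lower[where u=u and c=c0, OF A k a u ind c0])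
    have b: "bdd_above (Rs u)" unfolding Rs_def by (rule rayleigh_bdd[where u=u, OF A k u ind])
    show ?thesis by (rule cSup_upper2[OF mem l b])
  qed
  define Z where "Z = (pi\<^sup>2 - 2 * \<alpha> * s)\<^sup>2 + 64 * \<alpha> * s"
  define \<mu> where "\<mu> = pi\<^sup>2 * (pi\<^sup>2 + 2 * \<alpha> * s - sqrt Z) / (2 * (pi\<^sup>2 - 8) * s\<^sup>2)"
  define a0 where "a0 = 2 * \<mu> * s / pi"
  define b0 where "b0 = 2 * \<alpha> - \<mu> * s"
  note MU = mu_alg[OF s a, folded Z_def, folded \<mu>_def, folded a0_def b0_def]
  define f where "f = (\<lambda>t. a0 + b0 * sin (pi * t / s))"
  define f' where "f' = (\<lambda>t. b0 * (pi / s) * cos (pi * t / s))"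
  have df: "(f has_real_derivative f' t) (at t)" for t
    unfolding f_def f'_def using s by (auto intro!: derivative_eq_intros)
  have cf': "continuous_on UNIV f'" unfolding f'_def[abs_def] using s by (intro continuous_intros) auto
  have I0: "integral {0..s} (\<lambda>t. (f t)\<^sup>2) = s * (a0\<^sup>2 + 4 * a0 * b0 / pi + b0\<^sup>2 / 2)"
    unfolding f_def using trig_I0[OF s] .
  have I1: "integral {0..s} (\<lambda>t. (f' t)\<^sup>2) = b0\<^sup>2 * pi\<^sup>2 / (2 * s)"
    unfolding f'_def using trig_I1[OF s] .
  have fb: "(f 0)\<^sup>2 + (f s)\<^sup>2 = 2 * a0\<^sup>2" unfolding f_def using s by simp
  have I0pos: "integral {0..s} (\<lambda>t. (f t)\<^sup>2) > 0" unfolding I0 by (rule MU(3))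
  have keyeq: "integral {0..s} (\<lambda>t. (f' t)\<^sup>2) + \<alpha> * ((f 0)\<^sup>2 + (f s)\<^sup>2) = \<mu> * integral {0..s} (\<lambda>t. (f t)\<^sup>2)"
    unfolding I0 I1 fb by (rule MU(2))
  define u0 where "u0 = tu s f"
  have s0: "s \<noteq> 0" using s by simp
  have u0C: "\<And>i. i < k \<Longrightarrow> C1_fun (u0 i)" unfolding u0_def using tu_C1(1)[OF s0 df cf'] by blast
  have TF1: "integral (S_union A k) (\<lambda>x. (\<Sum>j<k. c j * u0 j x)\<^sup>2) = (\<Sum>i<k. (c i)\<^sup>2) * (integral {0..s} (\<lambda>t. (f t)\<^sup>2))\<^sup>2" for c
    unfolding u0_def s_def by (rule test_facts(1)[OF A k df cf'])
  have TF2: "dirichlet (S_union A k) (\<lambda>x. \<Sum>j<k. c j * u0 j x) + \<alpha> * S_bint A k (\<lambda>x. (\<Sum>j<k. c j * u0 j x)\<^sup>2)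
           = (\<Sum>i<k. (c i)\<^sup>2) * (2 * integral {0..s} (\<lambda>t. (f t)\<^sup>2) *
               (integral {0..s} (\<lambda>t. (f' t)\<^sup>2) + \<alpha> * ((f 0)\<^sup>2 + (f s)\<^sup>2)))" for c
    unfolding u0_def s_def by (rule test_facts(2)[OF A k df cf'])
  have sumpos: "(\<Sum>i<k. (c i)\<^sup>2) > 0" if cnz: "\<exists>i<k. c i \<noteq> 0" for c :: "nat \<Rightarrow> real"
  proof -
    obtain i where i: "i < k" "c i \<noteq> 0" using cnz by blast
    have "(c i)\<^sup>2 \<le> (\<Sum>j<k. (c j)\<^sup>2)" using i by (intro member_le_sum) auto
    moreover have "(c i)\<^sup>2 > 0" using i by simp
    ultimately show ?thesis by linarith
  qed
  have u0ind: "\<forall>c. integral (S_union A k) (\<lambda>x. (\<Sum>i<k. c i * u0 i x)\<^sup>2) = 0 \<longrightarrow> (\<forall>i<k. c i = 0)"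
  proof (rule allI, rule impI)
    fix c :: "nat \<Rightarrow> real"
    assume "integral (S_union A k) (\<lambda>x. (\<Sum>i<k. c i * u0 i x)\<^sup>2) = 0"
    then have "(\<Sum>i<k. (c i)\<^sup>2) * (integral {0..s} (\<lambda>t. (f t)\<^sup>2))\<^sup>2 = 0" unfolding TF1 .
    then have "(\<Sum>i<k. (c i)\<^sup>2) = 0" using I0pos by simp
    then show "\<forall>i<k. c i = 0" using sumpos by force
  qed
  have Adm0: "Adm u0" unfolding Adm_def using u0C u0ind by blast
  have RSle: "Sup (Rs u0) \<le> 2 * \<mu>"
  proof (rule cSup_least)
    define c0 where "c0 = (\<lambda>i::nat. if i = 0 then (1::real) else 0)"
    have c0: "\<exists>i<k. c0 i \<noteq> 0" using k unfolding c0_def by (intro exI[of _ 0]) auto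
    show "Rs u0 \<noteq> {}" unfolding Rs_def using c0 by blast
    fix x assume "x \<in> Rs u0"
    then obtain c where c: "\<exists>i<k. c i \<noteq> 0" and x: "x = robin_rayleigh (S_union A k) (S_bint A k) \<alpha> (\<lambda>x. \<Sum>i<k. c i * u0 i x)"
      unfolding Rs_def by blast
    have sp: "(\<Sum>i<k. (c i)\<^sup>2) > 0" by (rule sumpos[OF c])
    have "x = (\<Sum>i<k. (c i)\<^sup>2) * (2 * integral {0..s} (\<lambda>t. (f t)\<^sup>2) * (\<mu> * integral {0..s} (\<lambda>t. (f t)\<^sup>2)))
              / ((\<Sum>i<k. (c i)\<^sup>2) * (integral {0..s} (\<lambda>t. (f t)\<^sup>2))\<^sup>2)"
      unfolding x robin_rayleigh_def TF1 TF2 keyeq ..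
    also have "\<dots> = 2 * \<mu>" using sp I0pos by (simp add: field_simps power2_eq_square)
    finally show "x \<le> 2 * \<mu>" by simp
  qed
  have Ene: "E \<noteq> {}" unfolding E_def using Adm0 by blast
  have Elow: "\<forall>e\<in>E. m2 \<le> e" unfolding E_def using LBu by blast
  have lower: "m2 \<le> Inf E" using Ene Elow by (intro cInf_greatest) auto
  have bddE: "bdd_below E" using Elow by (auto simp: bdd_below_def)
  have "Sup (Rs u0) \<in> E" unfolding E_def using Adm0 by blast
  then have upper: "Inf E \<le> 2 * \<mu>" using cInf_lower[OF _ bddE] RSle by (meson order_trans)
  show ?thesis
    unfolding eig L_conv[OF A k] U_conv[OF A k, folded s_def, folded Z_def]
    using lower upper unfolding m2_def \<mu>_def Z_def by simp
qed

end
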